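(* Let $G$ be a finite graph with $n$ vertices and maximum degree $\Delta$, let $q\in\mathbb N$, $\beta\ge0$ and $\varepsilon>0$. If $\beta\le 2\varepsilon/\Delta$, then the transition matrix $P_{\rm SW}$ of the Swendsen--Wang dynamics for the $q$-state Potts model on $G$ at inverse temperature $\beta$ satisfies \[ \lambda(P_{\rm SW})\;\ge\;\frac{c_{\rm SW}(1-\varepsilon)}{n},\qquad c_{\rm SW}=q^{-1}\bigl(q\,e^{2\beta}\bigr)^{-2\Delta}. \]
   Context: Graphs are finite; parallel edges and loops are allowed; $\deg_G(v)$ is the number of edges having $v$ as an endvertex and $\Delta$ its maximum. For $A\subseteq E$, $c(A)$ is the number of connected components of $(V,A)$. Potts model: $\Omega_{\rm P}=\{1,\dots,q\}^V$, $E(\sigma)=\{e\in E:$ both endvertices of $e$ have the same color in $\sigma\}$, $\pi(\sigma)=e^{\beta|E(\sigma)|}/Z$. Swendsen--Wang dynamics: with $p=1-e^{-\beta}$, $P_{\rm SW}(\sigma,\tau)=(1-p)^{|E(\sigma)|}\sum_{A\subseteq E(\sigma)\cap E(\tau)}\bigl(\tfrac{p}{1-p}\bigr)^{|A|}q^{-c(A)}$; it is ergodic and reversible w.r.t. $\pi$. Spectral gap: $\lambda(P)=1-\max\{|\xi|:\xi\text{ an eigenvalue of }P,\ \xi\neq1\}$. *)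

theory Defs
  imports Complex_Main "HOL-Library.FuncSet"
begin

text \<open>A finite multigraph: vertex set V, edge set E, and an endpoint map
  ends :: 'e => 'v * 'v (parallel edges and loops allowed).\<close>

definition multigraph :: "'v set \<Rightarrow> 'e set \<Rightarrow> ('e \<Rightarrow> 'v \<times> 'v) \<Rightarrow> bool" where
  "multigraph V E ends \<longleftrightarrow> finite V \<and> finite E \<and>
     (\<forall>e\<in>E. fst (ends e) \<in> V \<and> snd (ends e) \<in> V)"

definition deg :: "'e set \<Rightarrow> ('e \<Rightarrow> 'v \<times> 'v) \<Rightarrow> 'v \<Rightarrow> nat" where
  "deg E ends v = card {e\<in>E. fst (ends e) = v \<or> snd (ends e) = v}"

definition max_deg :: "'v set \<Rightarrow> 'e set \<Rightarrow> ('e \<Rightarrow> 'v \<times> 'v) \<Rightarrow> nat" where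
  "max_deg V E ends = Max (insert 0 (deg E ends ` V))"

definition conn_rel :: "'v set \<Rightarrow> ('e \<Rightarrow> 'v \<times> 'v) \<Rightarrow> 'e set \<Rightarrow> ('v \<times> 'v) set" where
  "conn_rel V ends A =
     (Id_on V \<union> ends ` A \<union> (ends ` A)\<inverse>)\<^sup>* \<inter> (V \<times> V)"

definition num_comp :: "'v set \<Rightarrow> ('e \<Rightarrow> 'v \<times> 'v) \<Rightarrow> 'e set \<Rightarrow> nat" where
  "num_comp V ends A = card (V // conn_rel V ends A)"

definition potts_configs :: "'v set \<Rightarrow> nat \<Rightarrow> ('v \<Rightarrow> nat) set" where
  "potts_configs V q = (V \<rightarrow>\<^sub>E {1..q})"

definition mono_edges :: "'e set \<Rightarrow> ('e \<Rightarrow> 'v \<times> 'v) \<Rightarrow> ('v \<Rightarrow> nat) \<Rightarrow> 'e set" where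
  "mono_edges E ends \<sigma> = {e\<in>E. \<sigma> (fst (ends e)) = \<sigma> (snd (ends e))}"

definition P_SW :: "'v set \<Rightarrow> 'e set \<Rightarrow> ('e \<Rightarrow> 'v \<times> 'v) \<Rightarrow> nat \<Rightarrow> real
                     \<Rightarrow> ('v \<Rightarrow> nat) \<Rightarrow> ('v \<Rightarrow> nat) \<Rightarrow> real" where
  "P_SW V E ends q \<beta> \<sigma> \<tau> =
     (let p = 1 - exp (- \<beta>) in
      (1 - p) ^ card (mono_edges E ends \<sigma>) *
      (\<Sum>A\<in>Pow (mono_edges E ends \<sigma> \<inter> mono_edges E ends \<tau>).
          (p / (1 - p)) ^ card A * (1 / real q ^ num_comp V ends A)))"

definition is_eigenvalue :: "'a set \<Rightarrow> ('a \<Rightarrow> 'a \<Rightarrow> real) \<Rightarrow> complex \<Rightarrow> bool" where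
  "is_eigenvalue \<Omega> P \<xi> \<longleftrightarrow>
     (\<exists>f :: 'a \<Rightarrow> complex. (\<exists>x\<in>\<Omega>. f x \<noteq> 0) \<and>
        (\<forall>x\<in>\<Omega>. (\<Sum>y\<in>\<Omega>. complex_of_real (P x y) * f y) = \<xi> * f x))"

text \<open>Spectral gap 1 - max{|xi| : xi eigenvalue, xi ~= 1}; equals 1 if there is no
  eigenvalue other than 1.\<close>
definition spectral_gap :: "'a set \<Rightarrow> ('a \<Rightarrow> 'a \<Rightarrow> real) \<Rightarrow> real" where
  "spectral_gap \<Omega> P =
     1 - Max (insert 0 {cmod \<xi> | \<xi>. is_eigenvalue \<Omega> P \<xi> \<and> \<xi> \<noteq> 1})"

end

theory Submission
  imports Defs "Jordan_Normal_Form.Char_Poly"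
begin

lemma count_FA:
  fixes V :: "'v set" and ends :: "'e \<Rightarrow> 'v \<times> 'v"
  assumes fin: "finite V" and AV: "\<forall>e\<in>A. fst (ends e) \<in> V \<and> snd (ends e) \<in> V"
  shows "card {\<tau>\<in>V \<rightarrow>\<^sub>E {1..q}. \<forall>e\<in>A. \<tau> (fst (ends e)) = \<tau> (snd (ends e))}
         = q ^ num_comp V ends A"
proof -
  define G where "G = Id_on V \<union> ends ` A \<union> (ends ` A)\<inverse>"
  define R where "R = conn_rel V ends A"
  have R_eq: "R = G\<^sup>* \<inter> (V \<times> V)" unfolding R_def G_def conn_rel_def by simp
  have symG: "sym G" unfolding G_def sym_def by auto
  have eqR: "equiv V R"
    unfolding equiv_def
  proof (intro conjI)
    show "refl_on V R" unfolding refl_on_def R_eq by auto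
    show "sym R" using sym_rtrancl[OF symG] unfolding R_eq sym_def by blast
    show "trans R" unfolding R_eq trans_def
      by (meson IntD1 IntD2 IntI mem_Sigma_iff rtrancl_trans)
  qed (auto simp: R_eq)
  have resp: "(\<forall>e\<in>A. \<tau> (fst (ends e)) = \<tau> (snd (ends e))) \<longleftrightarrow> (\<forall>(x,y)\<in>R. \<tau> x = \<tau> y)" for \<tau> :: "'v \<Rightarrow> nat"
  proof
    assume H: "\<forall>e\<in>A. \<tau> (fst (ends e)) = \<tau> (snd (ends e))"
    have "\<tau> x = \<tau> y" if "(x,y) \<in> G\<^sup>*" for x y
      using that
    proof (induction rule: rtrancl_induct)
      case base then show ?case by simp
    next
      case (step y z)
      from step.hyps(2) have "\<tau> y = \<tau> z" unfolding G_def using H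
        by (auto simp: Id_on_def) (metis fst_conv snd_conv)+
      then show ?case using step.IH by simp
    qed
    then show "\<forall>(x,y)\<in>R. \<tau> x = \<tau> y" unfolding R_eq by auto
  next
    assume H: "\<forall>(x,y)\<in>R. \<tau> x = \<tau> y"
    show "\<forall>e\<in>A. \<tau> (fst (ends e)) = \<tau> (snd (ends e))"
    proof
      fix e assume e: "e \<in> A"
      have "(fst (ends e), snd (ends e)) \<in> G"
        unfolding G_def using e by (auto intro: image_eqI[where x=e])
      then have "(fst (ends e), snd (ends e)) \<in> R" unfolding R_eq using AV e by (auto simp: mem_Times_iff)
      then show "\<tau> (fst (ends e)) = \<tau> (snd (ends e))" using H by auto
    qed
  qed
  define S where "S = {\<tau>\<in>V \<rightarrow>\<^sub>E {1..q}. \<forall>(x,y)\<in>R. \<tau> x = \<tau> y}"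
  have S_eq: "{\<tau>\<in>V \<rightarrow>\<^sub>E {1..q}. \<forall>e\<in>A. \<tau> (fst (ends e)) = \<tau> (snd (ends e))} = S"
    unfolding S_def using resp by blast
  define \<phi> where "\<phi> \<tau> = (\<lambda>X\<in>V//R. \<tau> (SOME x. x \<in> X))" for \<tau> :: "'v \<Rightarrow> nat"
  define \<psi> where "\<psi> h = (\<lambda>x\<in>V. h (R``{x}))" for h :: "'v set \<Rightarrow> nat"
  have RV: "R \<subseteq> V \<times> V" using eqR by (simp add: equiv_type)
  have some_in: "(SOME x. x \<in> X) \<in> X" "R``{SOME x. x \<in> X} = X" "(SOME x. x \<in> X) \<in> V"
    if XQ: "X \<in> V//R" for X
  proof -
    obtain x0 where x0: "x0 \<in> V" "X = R``{x0}" using XQ by (auto elim: quotientE)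
    have "x0 \<in> X" using x0 eqR equiv_class_self by metis
    then show a: "(SOME x. x \<in> X) \<in> X" by (rule someI)
    then show "R``{SOME x. x \<in> X} = X" using x0 eqR
      by (metis Image_singleton_iff equiv_class_eq)
    show "(SOME x. x \<in> X) \<in> V" using a x0 RV by auto
  qed
  have bij: "bij_betw \<phi> S ((V//R) \<rightarrow>\<^sub>E {1..q})"
  proof (rule bij_betw_byWitness[where f'=\<psi>])
    show "\<forall>a\<in>S. \<psi> (\<phi> a) = a"
    proof
      fix \<tau> assume t: "\<tau> \<in> S"
      show "\<psi> (\<phi> \<tau>) = \<tau>"
      proof
        fix x show "\<psi> (\<phi> \<tau>) x = \<tau> x"
        proof (cases "x \<in> V")
          case True
          have Q: "R``{x} \<in> V//R" using True by (rule quotientI)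
          have "(x, SOME y. y \<in> R``{x}) \<in> R" using some_in(1)[OF Q] by simp
          then have "\<tau> (SOME y. y \<in> R``{x}) = \<tau> x" using t unfolding S_def by auto
          then show ?thesis using True Q unfolding \<psi>_def \<phi>_def by simp
        next
          case False then show ?thesis using t unfolding S_def \<psi>_def by (auto simp: PiE_def extensional_def)
        qed
      qed
    qed
    show "\<forall>h\<in>(V//R) \<rightarrow>\<^sub>E {1..q}. \<phi> (\<psi> h) = h"
    proof
      fix h assume h: "h \<in> (V//R) \<rightarrow>\<^sub>E {1..q}"
      show "\<phi> (\<psi> h) = h"
      proof
        fix X show "\<phi> (\<psi> h) X = h X"
        proof (cases "X \<in> V//R")
          case True then show ?thesis using some_in[OF True] unfolding \<phi>_def \<psi>_def by simp
        next
          case False then show ?thesis using h unfolding \<phi>_def by (auto simp: PiE_def extensional_def)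
        qed
      qed
    qed
    show "\<phi> ` S \<subseteq> (V//R) \<rightarrow>\<^sub>E {1..q}"
      using some_in unfolding \<phi>_def S_def by (auto simp: PiE_def Pi_def)
    show "\<psi> ` ((V//R) \<rightarrow>\<^sub>E {1..q}) \<subseteq> S"
    proof
      fix t assume "t \<in> \<psi> ` ((V//R) \<rightarrow>\<^sub>E {1..q})"
      then obtain h where h: "h \<in> (V//R) \<rightarrow>\<^sub>E {1..q}" and t: "t = \<psi> h" by auto
      have "t \<in> V \<rightarrow>\<^sub>E {1..q}" using h quotientI[of _ V R] unfolding t \<psi>_def by (auto simp: PiE_def Pi_def)
      moreover have "\<forall>(x,y)\<in>R. t x = t y"
      proof clarify
        fix x y assume xy: "(x,y) \<in> R"
        then have "R``{x} = R``{y}" using eqR by (simp add: equiv_class_eq)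
        then show "t x = t y" using xy RV unfolding t \<psi>_def by auto
      qed
      ultimately show "t \<in> S" unfolding S_def by simp
    qed
  qed
  have "finite (V//R)" using fin RV by (rule finite_quotient)
  then have "card ((V//R) \<rightarrow>\<^sub>E {1..q}) = q ^ card (V//R)" by (simp add: card_funcsetE)
  then show ?thesis using bij_betw_same_card[OF bij] S_eq
    unfolding num_comp_def R_def by simp
qed

lemma sum_Pow_pow:
  fixes y :: real
  assumes "finite S"
  shows "(\<Sum>A\<in>Pow S. y ^ card A) = (1 + y) ^ card S"
proof -
  have "(\<Prod>x\<in>S. y + 1) = (\<Sum>X\<in>Pow S. prod (\<lambda>_. y) X * prod (\<lambda>_. 1) (S - X))"
    by (rule prod_add[OF assms])
  then show ?thesis by (simp add: add.commute)
qed

locale sw =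
  fixes V :: "'v set" and E :: "'e set" and ends :: "'e \<Rightarrow> 'v \<times> 'v"
    and q :: nat and \<beta> :: real
  assumes mg: "multigraph V E ends" and beta: "\<beta> \<ge> 0" and q1: "q \<ge> 1"
begin

abbreviation "Om \<equiv> potts_configs V q"
abbreviation "ME \<equiv> mono_edges E ends"
definition "w \<sigma> = exp (\<beta> * real (card (ME \<sigma>)))"
definition "xx = exp \<beta> - 1"
definition "F A = {\<tau>\<in>Om. A \<subseteq> ME \<tau>}"
definition "cq A = real q ^ num_comp V ends A"
definition "K \<sigma> \<tau> = (\<Sum>A\<in>Pow (ME \<sigma> \<inter> ME \<tau>). xx ^ card A / cq A)"

lemma finV: "finite V" and finE: "finite E" and endsV: "e \<in> E \<Longrightarrow> fst (ends e) \<in> V \<and> snd (ends e) \<in> V"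
  using mg unfolding multigraph_def by auto

lemma finOm: "finite Om"
  unfolding potts_configs_def using finV by (simp add: finite_PiE)

lemma w_pos: "w \<sigma> > 0" unfolding w_def by simp

lemma xx_nonneg: "xx \<ge> 0" unfolding xx_def using beta by simp

lemma cq_pos: "cq A > 0" unfolding cq_def using q1 by simp

lemma ME_sub: "ME \<sigma> \<subseteq> E" unfolding mono_edges_def by auto

lemma finME: "finite (ME \<sigma>)" using finite_subset[OF ME_sub finE] .

lemma P_eq: "P_SW V E ends q \<beta> \<sigma> \<tau> = K \<sigma> \<tau> / w \<sigma>"
proof -
  have a: "1 - (1 - exp (- \<beta>)) = exp (-\<beta>)" by simp
  have b: "(1 - exp (- \<beta>)) / exp (-\<beta>) = xx" unfolding xx_def
    by (simp add: field_simps exp_minus)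
  have c: "exp (-\<beta>) ^ n = 1 / w \<sigma>" if "n = card (ME \<sigma>)" for n
    unfolding w_def that by (simp add: exp_of_nat_mult[symmetric] exp_minus field_simps mult.commute)
  show ?thesis unfolding P_SW_def Let_def a b c[OF refl] K_def cq_def by simp
qed

lemma w_sum: "w \<sigma> = (\<Sum>A\<in>Pow (ME \<sigma>). xx ^ card A)"
  unfolding sum_Pow_pow[OF finME] w_def xx_def
  by (simp add: exp_of_nat_mult[symmetric] mult.commute)

lemma F_eq: "A \<subseteq> E \<Longrightarrow> F A = {\<tau>\<in>V \<rightarrow>\<^sub>E {1..q}. \<forall>e\<in>A. \<tau> (fst (ends e)) = \<tau> (snd (ends e))}"
  unfolding F_def potts_configs_def mono_edges_def by auto

lemma card_F: assumes "A \<subseteq> E" shows "card (F A) = q ^ num_comp V ends A"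
proof -
  have "\<forall>e\<in>A. fst (ends e) \<in> V \<and> snd (ends e) \<in> V" using assms endsV by blast
  from count_FA[OF finV this, of q] show ?thesis unfolding F_eq[OF assms] .
qed

lemma real_card_F: "A \<subseteq> E \<Longrightarrow> real (card (F A)) = cq A"
  using card_F unfolding cq_def by simp

lemma F_sub: "F A \<subseteq> Om" unfolding F_def by auto

lemma K_sym: "K \<sigma> \<tau> = K \<tau> \<sigma>" unfolding K_def by (simp add: Int_commute)

definition "ind A \<sigma> = (if A \<subseteq> ME \<sigma> then 1 else (0::real))"

lemma K_alt: "K \<sigma> \<tau> = (\<Sum>A\<in>Pow E. xx ^ card A / cq A * ind A \<sigma> * ind A \<tau>)"
proof -
  have "Pow (ME \<sigma> \<inter> ME \<tau>) = {A\<in>Pow E. A \<subseteq> ME \<sigma> \<and> A \<subseteq> ME \<tau>}" using ME_sub by auto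
  then have "K \<sigma> \<tau> = (\<Sum>A\<in>{A\<in>Pow E. A \<subseteq> ME \<sigma> \<and> A \<subseteq> ME \<tau>}. xx ^ card A / cq A)"
    unfolding K_def by simp
  also have "\<dots> = (\<Sum>A\<in>Pow E. if A \<subseteq> ME \<sigma> \<and> A \<subseteq> ME \<tau> then xx ^ card A / cq A else 0)"
    by (rule sum.inter_filter) (simp add: finE)
  also have "\<dots> = (\<Sum>A\<in>Pow E. xx ^ card A / cq A * ind A \<sigma> * ind A \<tau>)"
    by (rule sum.cong) (auto simp: ind_def)
  finally show ?thesis .
qed

lemma w_alt: "w \<sigma> = (\<Sum>A\<in>Pow E. xx ^ card A * ind A \<sigma>)"
proof -
  have "Pow (ME \<sigma>) = {A\<in>Pow E. A \<subseteq> ME \<sigma>}" using ME_sub by auto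
  then have "w \<sigma> = (\<Sum>A\<in>{A\<in>Pow E. A \<subseteq> ME \<sigma>}. xx ^ card A)" using w_sum by simp
  also have "\<dots> = (\<Sum>A\<in>Pow E. if A \<subseteq> ME \<sigma> then xx ^ card A else 0)"
    by (rule sum.inter_filter) (simp add: finE)
  also have "\<dots> = (\<Sum>A\<in>Pow E. xx ^ card A * ind A \<sigma>)"
    by (rule sum.cong) (auto simp: ind_def)
  finally show ?thesis .
qed

lemma sum_ind: "(\<Sum>\<sigma>\<in>Om. ind A \<sigma> * g \<sigma>) = (\<Sum>\<sigma>\<in>F A. g \<sigma>)"
proof -
  have "(\<Sum>\<sigma>\<in>F A. g \<sigma>) = (\<Sum>\<sigma>\<in>Om. if A \<subseteq> ME \<sigma> then g \<sigma> else 0)"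
    unfolding F_def by (rule sum.inter_filter[OF finOm])
  also have "\<dots> = (\<Sum>\<sigma>\<in>Om. ind A \<sigma> * g \<sigma>)" by (rule sum.cong) (auto simp: ind_def)
  finally show ?thesis by simp
qed

lemma row_sum: "(\<Sum>\<tau>\<in>Om. K \<sigma> \<tau>) = w \<sigma>"
proof -
  have "(\<Sum>\<tau>\<in>Om. K \<sigma> \<tau>) = (\<Sum>A\<in>Pow E. xx ^ card A / cq A * ind A \<sigma> * (\<Sum>\<tau>\<in>Om. ind A \<tau> * 1))"
    unfolding K_alt by (subst sum.swap) (simp add: sum_distrib_left)
  also have "\<dots> = (\<Sum>A\<in>Pow E. xx ^ card A * ind A \<sigma>)"
    unfolding sum_ind using real_card_F cq_pos by (intro sum.cong refl) (simp add: field_simps less_imp_neq[symmetric])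
  finally show ?thesis using w_alt by simp
qed

lemma col_sum: "(\<Sum>\<sigma>\<in>Om. K \<sigma> \<tau>) = w \<tau>"
  using row_sum[of \<tau>] by (simp add: K_sym)

lemma qf_eq: "(\<Sum>\<sigma>\<in>Om. \<Sum>\<tau>\<in>Om. K \<sigma> \<tau> * g \<sigma> * h \<tau>)
   = (\<Sum>A\<in>Pow E. xx ^ card A / cq A * (\<Sum>\<sigma>\<in>F A. g \<sigma>) * (\<Sum>\<sigma>\<in>F A. h \<sigma>))"
proof -
  have "(\<Sum>\<sigma>\<in>Om. \<Sum>\<tau>\<in>Om. K \<sigma> \<tau> * g \<sigma> * h \<tau>)
     = (\<Sum>\<sigma>\<in>Om. \<Sum>\<tau>\<in>Om. \<Sum>A\<in>Pow E. xx ^ card A / cq A * (ind A \<sigma> * g \<sigma>) * (ind A \<tau> * h \<tau>))"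
  proof (intro sum.cong refl)
    fix \<sigma> \<tau>
    show "K \<sigma> \<tau> * g \<sigma> * h \<tau> = (\<Sum>A\<in>Pow E. xx ^ card A / cq A * (ind A \<sigma> * g \<sigma>) * (ind A \<tau> * h \<tau>))"
      unfolding K_alt sum_distrib_right by (rule sum.cong) (simp_all add: mult_ac)
  qed
  also have "\<dots> = (\<Sum>\<sigma>\<in>Om. \<Sum>A\<in>Pow E. \<Sum>\<tau>\<in>Om. xx ^ card A / cq A * (ind A \<sigma> * g \<sigma>) * (ind A \<tau> * h \<tau>))"
    by (rule sum.cong[OF refl], rule sum.swap)
  also have "\<dots> = (\<Sum>A\<in>Pow E. \<Sum>\<sigma>\<in>Om. \<Sum>\<tau>\<in>Om. xx ^ card A / cq A * (ind A \<sigma> * g \<sigma>) * (ind A \<tau> * h \<tau>))"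
    by (rule sum.swap)
  also have "\<dots> = (\<Sum>A\<in>Pow E. xx ^ card A / cq A * (\<Sum>\<sigma>\<in>Om. ind A \<sigma> * g \<sigma>) * (\<Sum>\<tau>\<in>Om. ind A \<tau> * h \<tau>))"
    apply (simp only: sum_distrib_left sum_distrib_right mult.assoc)
    apply (rule sum.cong[OF refl], rule sum.swap)
    done
  finally show ?thesis unfolding sum_ind .
qed

lemma nrm_eq: "(\<Sum>\<sigma>\<in>Om. w \<sigma> * g \<sigma>) = (\<Sum>A\<in>Pow E. xx ^ card A * (\<Sum>\<sigma>\<in>F A. g \<sigma>))"
proof -
  have "(\<Sum>\<sigma>\<in>Om. w \<sigma> * g \<sigma>) = (\<Sum>\<sigma>\<in>Om. \<Sum>A\<in>Pow E. xx ^ card A * (ind A \<sigma> * g \<sigma>))"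
    unfolding w_alt sum_distrib_right by (intro sum.cong refl) (simp add: mult_ac)
  also have "\<dots> = (\<Sum>A\<in>Pow E. xx ^ card A * (\<Sum>\<sigma>\<in>Om. ind A \<sigma> * g \<sigma>))"
    by (subst sum.swap) (simp only: sum_distrib_left)
  finally show ?thesis unfolding sum_ind .
qed

end

lemma wCS:
  fixes w f g :: "'a \<Rightarrow> real"
  assumes "\<And>x. x \<in> S \<Longrightarrow> w x \<ge> 0"
  shows "(\<Sum>x\<in>S. w x * f x * g x)^2 \<le> (\<Sum>x\<in>S. w x * f x ^ 2) * (\<Sum>x\<in>S. w x * g x ^ 2)"
proof -
  define A where "A = (\<Sum>x\<in>S. w x * f x ^ 2)"
  define B where "B = (\<Sum>x\<in>S. w x * f x * g x)"
  define C where "C = (\<Sum>x\<in>S. w x * g x ^ 2)"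
  have "0 \<le> (\<Sum>x\<in>S. w x * (C * f x - B * g x)^2)"
    using assms by (intro sum_nonneg) simp
  also have "\<dots> = (\<Sum>x\<in>S. C^2 * (w x * f x ^ 2) - 2 * C * B * (w x * f x * g x) + B^2 * (w x * g x ^ 2))"
    by (rule sum.cong) (simp_all add: power2_eq_square algebra_simps)
  also have "\<dots> = C^2 * A - 2 * C * B * B + B^2 * C"
    unfolding A_def B_def C_def
    by (simp add: sum.distrib sum_subtractf sum_distrib_left)
  finally have *: "0 \<le> C * (A * C - B^2)" by (simp add: power2_eq_square algebra_simps)
  have C0: "C \<ge> 0" unfolding C_def using assms by (intro sum_nonneg) simp
  show ?thesis
  proof (cases "C = 0")
    case True
    then have "\<forall>x\<in>S. w x * g x ^ 2 = 0" if "finite S"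
      using assms that unfolding C_def by (subst sum_nonneg_eq_0_iff[symmetric]) auto
    then have "B = 0" unfolding B_def
      by (cases "finite S") (auto intro!: sum.neutral simp: power2_eq_square)
    moreover have "A \<ge> 0" unfolding A_def using assms by (intro sum_nonneg) simp
    ultimately show ?thesis using C0 by (simp add: B_def A_def C_def)
  next
    case False
    with C0 * have "0 \<le> A * C - B^2" by (simp add: zero_le_mult_iff)
    then show ?thesis unfolding A_def B_def C_def by simp
  qed
qed

lemma CS_card:
  fixes f :: "'a \<Rightarrow> real"
  shows "(\<Sum>x\<in>S. f x)^2 \<le> real (card S) * (\<Sum>x\<in>S. f x ^ 2)"
  using wCS[of S "\<lambda>_. 1" "\<lambda>_. 1" f] by simp

context sw begin

definition "D v = {e\<in>E. fst (ends e) = v \<or> snd (ends e) = v}"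
abbreviation "Dl \<equiv> max_deg V E ends"

lemma deg_le: "v \<in> V \<Longrightarrow> card (D v) \<le> Dl"
  unfolding max_deg_def D_def deg_def using finV by (intro Max_ge) auto

lemma fiber_swap:
  fixes v :: 'v and G :: "('v \<Rightarrow> nat) \<Rightarrow> ('v \<Rightarrow> nat) \<Rightarrow> real"
  assumes finS: "finite S"
    and cl: "\<forall>\<sigma>\<in>S. \<forall>c\<in>{1..q}. \<sigma>(v := c) \<in> S"
    and val: "\<forall>\<sigma>\<in>S. \<sigma> v \<in> {1..q}"
  shows "(\<Sum>\<sigma>\<in>S. \<Sum>c\<in>{1..q}. G \<sigma> (\<sigma>(v := c))) = (\<Sum>\<sigma>\<in>S. \<Sum>c\<in>{1..q}. G (\<sigma>(v := c)) \<sigma>)"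
proof -
  define N where "N \<sigma> = (\<lambda>c. \<sigma>(v := c)) ` {1..q}" for \<sigma> :: "'v \<Rightarrow> nat"
  have inj: "inj_on (\<lambda>c. \<sigma>(v := c)) {1..q}" for \<sigma> :: "'v \<Rightarrow> nat"
    by (rule inj_onI) (drule fun_cong[where x=v], simp)
  have re: "(\<Sum>c\<in>{1..q}. H \<sigma> (\<sigma>(v := c))) = (\<Sum>\<tau>\<in>N \<sigma>. H \<sigma> \<tau>)"
    for H :: "('v \<Rightarrow> nat) \<Rightarrow> ('v \<Rightarrow> nat) \<Rightarrow> real" and \<sigma>
    unfolding N_def by (simp only: sum.reindex[OF inj] comp_def)
  have finN: "finite (N \<sigma>)" for \<sigma> unfolding N_def by (rule finite_imageI) simp
  have sig: "(\<Sum>\<sigma>\<in>S. \<Sum>\<tau>\<in>N \<sigma>. H \<sigma> \<tau>) = sum (case_prod H) (Sigma S N)"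
    for H :: "('v \<Rightarrow> nat) \<Rightarrow> ('v \<Rightarrow> nat) \<Rightarrow> real"
    by (rule sum.Sigma[OF finS]) (simp add: finN)
  have sw1: "prod.swap p \<in> Sigma S N" if pS: "p \<in> Sigma S N" for p
  proof -
    obtain \<sigma> \<tau> where p: "p = (\<sigma>, \<tau>)" "\<sigma> \<in> S" "\<tau> \<in> N \<sigma>"
      using pS by (cases p) simp
    obtain c where c: "c \<in> {1..q}" "\<tau> = \<sigma>(v := c)" using p(3) unfolding N_def by blast
    have "\<sigma> v \<in> {1..q}" using val p(2) by blast
    then have "\<sigma> \<in> N (\<sigma>(v := c))" unfolding N_def by (rule rev_image_eqI) simp
    moreover have "\<sigma>(v := c) \<in> S" using cl p(2) c(1) by blast
    ultimately show ?thesis using p c by simp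
  qed
  have symm: "prod.swap ` Sigma S N = Sigma S N"
  proof
    show "prod.swap ` Sigma S N \<subseteq> Sigma S N" using sw1 by blast
    show "Sigma S N \<subseteq> prod.swap ` Sigma S N"
    proof
      fix p assume "p \<in> Sigma S N"
      then have "prod.swap p \<in> Sigma S N" by (rule sw1)
      then have "prod.swap (prod.swap p) \<in> prod.swap ` Sigma S N" by (rule imageI)
      then show "p \<in> prod.swap ` Sigma S N" by simp
    qed
  qed
  have injs: "inj_on prod.swap (Sigma S N)" by (rule inj_onI) (metis swap_swap)
  have "sum (case_prod (\<lambda>a b. G a b)) (Sigma S N) = sum (case_prod (\<lambda>a b. G a b)) (prod.swap ` Sigma S N)"
    by (simp only: symm)
  also have "\<dots> = sum (case_prod (\<lambda>a b. G a b) \<circ> prod.swap) (Sigma S N)"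
    by (rule sum.reindex[OF injs])
  also have "\<dots> = sum (case_prod (\<lambda>a b. G b a)) (Sigma S N)"
    by (rule sum.cong) auto
  finally have X: "sum (case_prod (\<lambda>a b. G a b)) (Sigma S N) = sum (case_prod (\<lambda>a b. G b a)) (Sigma S N)" .
  have L: "(\<Sum>\<sigma>\<in>S. \<Sum>c\<in>{1..q}. G \<sigma> (\<sigma>(v := c))) = sum (case_prod (\<lambda>a b. G a b)) (Sigma S N)"
    using re[of G] sig[of G] by simp
  have R: "(\<Sum>\<sigma>\<in>S. \<Sum>c\<in>{1..q}. G (\<sigma>(v := c)) \<sigma>) = sum (case_prod (\<lambda>a b. G b a)) (Sigma S N)"
    using re[of "\<lambda>a b. G b a"] sig[of "\<lambda>a b. G b a"] by simp
  show ?thesis using L R X by simp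
qed

lemma fiber_const:
  fixes v :: 'v and h :: "('v \<Rightarrow> nat) \<Rightarrow> real"
  assumes "finite S"
    and "\<forall>\<sigma>\<in>S. \<forall>c\<in>{1..q}. \<sigma>(v := c) \<in> S"
    and "\<forall>\<sigma>\<in>S. \<sigma> v \<in> {1..q}"
  shows "(\<Sum>\<sigma>\<in>S. \<Sum>c\<in>{1..q}. h (\<sigma>(v := c))) = real q * (\<Sum>\<sigma>\<in>S. h \<sigma>)"
  using fiber_swap[of S v "\<lambda>\<sigma> \<tau>. h \<tau>", OF assms] by (simp add: sum_distrib_left)

lemma Om_upd: "\<sigma> \<in> Om \<Longrightarrow> v \<in> V \<Longrightarrow> c \<in> {1..q} \<Longrightarrow> \<sigma>(v := c) \<in> Om"
  unfolding potts_configs_def by (auto simp: PiE_def Pi_def extensional_def)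

lemma Om_val: "\<sigma> \<in> Om \<Longrightarrow> v \<in> V \<Longrightarrow> \<sigma> v \<in> {1..q}"
  unfolding potts_configs_def by auto

lemma bracket_local:
  fixes g :: "('v \<Rightarrow> nat) \<Rightarrow> real" and v :: 'v
  assumes finS: "finite S"
    and cl: "\<forall>\<sigma>\<in>S. \<forall>c\<in>{1..q}. \<sigma>(v := c) \<in> S"
    and val: "\<forall>\<sigma>\<in>S. \<sigma> v \<in> {1..q}"
    and NS: "real (card S) \<le> N"
  shows "(\<Sum>\<sigma>\<in>S. g \<sigma>^2) - (\<Sum>\<sigma>\<in>S. g \<sigma>)^2 / N
         \<ge> (1 / (2 * real q)) * (\<Sum>\<sigma>\<in>S. \<Sum>c\<in>{1..q}. (g \<sigma> - g (\<sigma>(v := c)))^2)"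
proof -
  define Sg where "Sg \<sigma> = (\<Sum>c\<in>{1..q}. g (\<sigma>(v := c)))" for \<sigma>
  have qpos: "real q > 0" using q1 by simp
  have Sg_upd: "Sg (\<sigma>(v := c)) = Sg \<sigma>" for \<sigma> c unfolding Sg_def by simp
  have e1a: "(\<Sum>\<sigma>\<in>S. \<Sum>c\<in>{1..q}. (g \<sigma> - g (\<sigma>(v := c)))^2)
       = (\<Sum>\<sigma>\<in>S. \<Sum>c\<in>{1..q}. g \<sigma>^2) - 2 * (\<Sum>\<sigma>\<in>S. \<Sum>c\<in>{1..q}. g \<sigma> * g (\<sigma>(v := c)))
         + (\<Sum>\<sigma>\<in>S. \<Sum>c\<in>{1..q}. g (\<sigma>(v := c))^2)"
    by (simp add: power2_diff sum.distrib sum_subtractf sum_distrib_left mult.assoc)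
  have e1b: "(\<Sum>\<sigma>\<in>S. \<Sum>c\<in>{1..q}. g (\<sigma>(v := c))^2) = real q * (\<Sum>\<sigma>\<in>S. g \<sigma>^2)"
    by (rule fiber_const[of S v, OF finS cl val])
  have e1c: "(\<Sum>\<sigma>\<in>S. \<Sum>c\<in>{1..q}. g \<sigma> * g (\<sigma>(v := c))) = (\<Sum>\<sigma>\<in>S. g \<sigma> * Sg \<sigma>)"
    by (simp add: Sg_def sum_distrib_left)
  have e1d: "(\<Sum>\<sigma>\<in>S. \<Sum>c\<in>{1..q}. g \<sigma>^2) = real q * (\<Sum>\<sigma>\<in>S. g \<sigma>^2)"
    by (simp add: sum_distrib_left)
  have e1: "(\<Sum>\<sigma>\<in>S. \<Sum>c\<in>{1..q}. (g \<sigma> - g (\<sigma>(v := c)))^2)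
      = 2 * real q * (\<Sum>\<sigma>\<in>S. g \<sigma>^2) - 2 * (\<Sum>\<sigma>\<in>S. g \<sigma> * Sg \<sigma>)"
    using e1a e1b e1c e1d by linarith
  have e2: "(\<Sum>\<sigma>\<in>S. Sg \<sigma>^2) = real q * (\<Sum>\<sigma>\<in>S. g \<sigma> * Sg \<sigma>)"
  proof -
    have "(\<Sum>\<sigma>\<in>S. Sg \<sigma>^2) = (\<Sum>\<sigma>\<in>S. \<Sum>c\<in>{1..q}. Sg \<sigma> * g (\<sigma>(v := c)))"
      by (simp add: power2_eq_square Sg_def sum_distrib_left)
    also have "\<dots> = (\<Sum>\<sigma>\<in>S. \<Sum>c\<in>{1..q}. Sg (\<sigma>(v := c)) * g \<sigma>)"
      by (rule fiber_swap[of S v "\<lambda>\<sigma> \<tau>. Sg \<sigma> * g \<tau>", OF finS cl val])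
    also have "\<dots> = real q * (\<Sum>\<sigma>\<in>S. g \<sigma> * Sg \<sigma>)"
      by (simp add: Sg_upd sum_distrib_left mult.commute)
    finally show ?thesis .
  qed
  have e3: "(\<Sum>\<sigma>\<in>S. Sg \<sigma>) = real q * (\<Sum>\<sigma>\<in>S. g \<sigma>)"
    unfolding Sg_def by (rule fiber_const[of S v, OF finS cl val])
  have cs: "(\<Sum>\<sigma>\<in>S. Sg \<sigma>)^2 \<le> N * (\<Sum>\<sigma>\<in>S. Sg \<sigma>^2)"
  proof -
    have "(\<Sum>\<sigma>\<in>S. Sg \<sigma>)^2 \<le> real (card S) * (\<Sum>\<sigma>\<in>S. Sg \<sigma>^2)" by (rule CS_card)
    also have "\<dots> \<le> N * (\<Sum>\<sigma>\<in>S. Sg \<sigma>^2)"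
      using NS by (intro mult_right_mono) (auto intro: sum_nonneg)
    finally show ?thesis .
  qed
  show ?thesis
  proof (cases "N > 0")
    case False
    then have "card S = 0" using NS by simp
    then have "S = {}" using finS by simp
    then show ?thesis by simp
  next
    case Npos: True
    have "(\<Sum>\<sigma>\<in>S. g \<sigma>)^2 / N \<le> (1 / real q) * (\<Sum>\<sigma>\<in>S. g \<sigma> * Sg \<sigma>)"
    proof -
      have "(real q)^2 * (\<Sum>\<sigma>\<in>S. g \<sigma>)^2 \<le> N * (real q * (\<Sum>\<sigma>\<in>S. g \<sigma> * Sg \<sigma>))"
        using cs unfolding e2 e3 by (simp add: power_mult_distrib)
      then have "(\<Sum>\<sigma>\<in>S. g \<sigma>)^2 \<le> N * ((1 / real q) * (\<Sum>\<sigma>\<in>S. g \<sigma> * Sg \<sigma>))"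
        using qpos by (simp add: power2_eq_square field_simps)
      then show ?thesis using Npos by (simp add: field_simps)
    qed
    moreover have "(1 / (2 * real q)) * (2 * real q * (\<Sum>\<sigma>\<in>S. g \<sigma>^2) - 2 * (\<Sum>\<sigma>\<in>S. g \<sigma> * Sg \<sigma>))
        = (\<Sum>\<sigma>\<in>S. g \<sigma>^2) - (1 / real q) * (\<Sum>\<sigma>\<in>S. g \<sigma> * Sg \<sigma>)"
      using qpos by (simp add: field_simps)
    ultimately show ?thesis unfolding e1 by linarith
  qed
qed

end

context sw begin

definition "Esw g = (\<Sum>\<sigma>\<in>Om. w \<sigma> * g \<sigma>^2) - (\<Sum>\<sigma>\<in>Om. \<Sum>\<tau>\<in>Om. K \<sigma> \<tau> * g \<sigma> * g \<tau>)"
definition "Mloc v g = (\<Sum>\<sigma>\<in>Om. w \<sigma> * (\<Sum>c\<in>{1..q}. (g \<sigma> - g (\<sigma>(v := c)))^2))"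

definition "brk g A = (\<Sum>\<sigma>\<in>F A. g \<sigma>^2) - (\<Sum>\<sigma>\<in>F A. g \<sigma>)^2 / cq A"

lemma Esw_eq: "Esw g = (\<Sum>A\<in>Pow E. xx ^ card A * brk g A)"
proof -
  have "(\<Sum>\<sigma>\<in>Om. \<Sum>\<tau>\<in>Om. K \<sigma> \<tau> * g \<sigma> * g \<tau>) = (\<Sum>A\<in>Pow E. xx ^ card A * ((\<Sum>\<sigma>\<in>F A. g \<sigma>)^2 / cq A))"
    unfolding qf_eq by (rule sum.cong) (simp_all add: power2_eq_square)
  then show ?thesis unfolding Esw_def brk_def nrm_eq[of "\<lambda>\<sigma>. g \<sigma>^2"]
    by (simp add: right_diff_distrib sum_subtractf)
qed

lemma brk_nonneg: "A \<subseteq> E \<Longrightarrow> brk g A \<ge> 0"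
  unfolding brk_def using CS_card[of g "F A"] real_card_F[of A] cq_pos[of A]
  by (simp add: field_simps)

lemma nrm_eq_sub:
  "(\<Sum>A\<in>Pow E'. xx ^ card A * (\<Sum>\<sigma>\<in>F A. G \<sigma>)) = (\<Sum>\<sigma>\<in>Om. (\<Sum>A\<in>Pow E'. xx ^ card A * ind A \<sigma>) * G \<sigma>)"
proof -
  have "(\<Sum>A\<in>Pow E'. xx ^ card A * (\<Sum>\<sigma>\<in>F A. G \<sigma>)) = (\<Sum>A\<in>Pow E'. \<Sum>\<sigma>\<in>Om. xx ^ card A * ind A \<sigma> * G \<sigma>)"
    unfolding sum_ind[symmetric] by (simp add: sum_distrib_left mult.assoc)
  also have "\<dots> = (\<Sum>\<sigma>\<in>Om. \<Sum>A\<in>Pow E'. xx ^ card A * ind A \<sigma> * G \<sigma>)" by (rule sum.swap)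
  also have "\<dots> = (\<Sum>\<sigma>\<in>Om. (\<Sum>A\<in>Pow E'. xx ^ card A * ind A \<sigma>) * G \<sigma>)"
    by (simp add: sum_distrib_right)
  finally show ?thesis .
qed

lemma weight_sub:
  assumes "E' \<subseteq> E"
  shows "(\<Sum>A\<in>Pow E'. xx ^ card A * ind A \<sigma>) = exp (\<beta> * real (card (E' \<inter> ME \<sigma>)))"
proof -
  have fE': "finite E'" using finite_subset[OF assms finE] .
  have "Pow (E' \<inter> ME \<sigma>) = {A\<in>Pow E'. A \<subseteq> ME \<sigma>}" by auto
  then have "(\<Sum>A\<in>Pow (E' \<inter> ME \<sigma>). xx ^ card A) = (\<Sum>A\<in>Pow E'. if A \<subseteq> ME \<sigma> then xx ^ card A else 0)"
    using sum.inter_filter[of "Pow E'"] fE' by simp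
  also have "\<dots> = (\<Sum>A\<in>Pow E'. xx ^ card A * ind A \<sigma>)"
    by (rule sum.cong) (auto simp: ind_def)
  finally have "(\<Sum>A\<in>Pow E'. xx ^ card A * ind A \<sigma>) = (1 + xx) ^ card (E' \<inter> ME \<sigma>)"
    using sum_Pow_pow[of "E' \<inter> ME \<sigma>" xx] fE' by simp
  then show ?thesis unfolding xx_def by (simp add: exp_of_nat_mult[symmetric] mult.commute)
qed

lemma F_closed:
  assumes A: "A \<subseteq> E - D v" and v: "v \<in> V"
  shows "\<forall>\<sigma>\<in>F A. \<forall>c\<in>{1..q}. \<sigma>(v := c) \<in> F A" "\<forall>\<sigma>\<in>F A. \<sigma> v \<in> {1..q}"
proof -
  show "\<forall>\<sigma>\<in>F A. \<sigma> v \<in> {1..q}" using Om_val[OF _ v] F_sub by blast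
  show "\<forall>\<sigma>\<in>F A. \<forall>c\<in>{1..q}. \<sigma>(v := c) \<in> F A"
  proof (intro ballI)
    fix \<sigma> c assume s: "\<sigma> \<in> F A" and c: "c \<in> {1..q}"
    have "\<sigma>(v := c) \<in> Om" using Om_upd[OF _ v c] s F_sub by blast
    moreover have "A \<subseteq> ME (\<sigma>(v := c))"
    proof
      fix e assume e: "e \<in> A"
      then have "e \<in> ME \<sigma>" using s unfolding F_def by blast
      moreover have "fst (ends e) \<noteq> v" "snd (ends e) \<noteq> v" using A e unfolding D_def by auto
      ultimately show "e \<in> ME (\<sigma>(v := c))" unfolding mono_edges_def by simp
    qed
    ultimately show "\<sigma>(v := c) \<in> F A" unfolding F_def by blast
  qed
qed

lemma Esw_ge:
  assumes v: "v \<in> V"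
  shows "Esw g \<ge> exp (- \<beta> * real Dl) / (2 * real q) * Mloc v g"
proof -
  define L where "L \<sigma> = (\<Sum>c\<in>{1..q}. (g \<sigma> - g (\<sigma>(v := c)))^2)" for \<sigma>
  have L0: "L \<sigma> \<ge> 0" for \<sigma> unfolding L_def by (intro sum_nonneg) simp
  have sub: "Pow (E - D v) \<subseteq> Pow E" by auto
  have "(\<Sum>A\<in>Pow (E - D v). xx ^ card A * brk g A) \<le> (\<Sum>A\<in>Pow E. xx ^ card A * brk g A)"
    by (rule sum_mono2) (use finE brk_nonneg xx_nonneg in auto)
  moreover have "(\<Sum>A\<in>Pow (E - D v). xx ^ card A * ((1 / (2 * real q)) * (\<Sum>\<sigma>\<in>F A. L \<sigma>)))
       \<le> (\<Sum>A\<in>Pow (E - D v). xx ^ card A * brk g A)"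
  proof (rule sum_mono)
    fix A assume "A \<in> Pow (E - D v)"
    then have A: "A \<subseteq> E - D v" by simp
    then have "A \<subseteq> E" by blast
    then have "real (card (F A)) \<le> cq A" using real_card_F by simp
    have fin: "finite (F A)" using finite_subset[OF F_sub finOm] .
    have "(1 / (2 * real q)) * (\<Sum>\<sigma>\<in>F A. L \<sigma>) \<le> brk g A"
      unfolding brk_def L_def
      by (rule bracket_local[OF fin F_closed[OF A v]]) (rule \<open>real (card (F A)) \<le> cq A\<close>)
    then show "xx ^ card A * ((1 / (2 * real q)) * (\<Sum>\<sigma>\<in>F A. L \<sigma>)) \<le> xx ^ card A * brk g A"
      using xx_nonneg by (intro mult_left_mono) auto
  qed
  moreover have "(\<Sum>A\<in>Pow (E - D v). xx ^ card A * ((1 / (2 * real q)) * (\<Sum>\<sigma>\<in>F A. L \<sigma>)))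
      = (1 / (2 * real q)) * (\<Sum>\<sigma>\<in>Om. exp (\<beta> * real (card ((E - D v) \<inter> ME \<sigma>))) * L \<sigma>)"
  proof -
    have "(\<Sum>A\<in>Pow (E - D v). xx ^ card A * ((1 / (2 * real q)) * (\<Sum>\<sigma>\<in>F A. L \<sigma>)))
       = (1 / (2 * real q)) * (\<Sum>A\<in>Pow (E - D v). xx ^ card A * (\<Sum>\<sigma>\<in>F A. L \<sigma>))"
      by (simp only: sum_distrib_left mult.left_commute)
    also have "\<dots> = (1 / (2 * real q)) * (\<Sum>\<sigma>\<in>Om. exp (\<beta> * real (card ((E - D v) \<inter> ME \<sigma>))) * L \<sigma>)"
      unfolding nrm_eq_sub weight_sub[OF Diff_subset] ..
    finally show ?thesis .
  qed
  moreover have "exp (- \<beta> * real Dl) / (2 * real q) * Mloc v g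
      \<le> (1 / (2 * real q)) * (\<Sum>\<sigma>\<in>Om. exp (\<beta> * real (card ((E - D v) \<inter> ME \<sigma>))) * L \<sigma>)"
  proof -
    have "exp (- \<beta> * real Dl) * Mloc v g \<le> (\<Sum>\<sigma>\<in>Om. exp (\<beta> * real (card ((E - D v) \<inter> ME \<sigma>))) * L \<sigma>)"
      unfolding Mloc_def sum_distrib_left L_def[symmetric]
    proof (rule sum_mono)
      fix \<sigma> assume "\<sigma> \<in> Om"
      have "card (ME \<sigma>) \<le> card ((E - D v) \<inter> ME \<sigma>) + card (D v)"
      proof -
        have "ME \<sigma> \<subseteq> ((E - D v) \<inter> ME \<sigma>) \<union> D v" using ME_sub by auto
        then have "card (ME \<sigma>) \<le> card (((E - D v) \<inter> ME \<sigma>) \<union> D v)"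
          by (rule card_mono[rotated]) (use finE in \<open>auto simp: D_def\<close>)
        also have "\<dots> \<le> card ((E - D v) \<inter> ME \<sigma>) + card (D v)" by (rule card_Un_le)
        finally show ?thesis .
      qed
      then have "real (card (ME \<sigma>)) \<le> real (card ((E - D v) \<inter> ME \<sigma>)) + real Dl"
        using deg_le[OF v] by linarith
      then have "- \<beta> * real Dl + \<beta> * real (card (ME \<sigma>)) \<le> \<beta> * real (card ((E - D v) \<inter> ME \<sigma>))"
        using beta by (simp add: algebra_simps) (metis add_le_cancel_left distrib_left mult_left_mono)
      then have "exp (- \<beta> * real Dl) * w \<sigma> \<le> exp (\<beta> * real (card ((E - D v) \<inter> ME \<sigma>)))"
        unfolding w_def by (simp add: exp_add[symmetric])
      then show "exp (- \<beta> * real Dl) * (w \<sigma> * L \<sigma>) \<le> exp (\<beta> * real (card ((E - D v) \<inter> ME \<sigma>))) * L \<sigma>"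
        using L0[of \<sigma>] by (simp add: mult.assoc[symmetric] mult_right_mono)
    qed
    then show ?thesis using q1 by (simp add: divide_right_mono)
  qed
  ultimately show ?thesis unfolding Esw_eq by linarith
qed

end

lemma tanh_bd:
  fixes s :: real assumes s: "s \<ge> 0"
  shows "exp s - 1 \<le> s / 2 * (exp s + 1)"
proof -
  define f where "f x = x / 2 * (exp x + 1) - exp x + 1" for x :: real
  have "f 0 \<le> f s"
  proof (rule DERIV_nonneg_imp_nondecreasing[OF s])
    fix x :: real assume x: "0 \<le> x" "x \<le> s"
    have d: "(f has_real_derivative ((exp x + 1) / 2 + x / 2 * exp x - exp x)) (at x)"
      unfolding f_def by (auto intro!: derivative_eq_intros)
    have "exp (-x) \<ge> 1 - x" using exp_ge_add_one_self[of "-x"] by simp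
    then have "exp (-x) * exp x \<ge> (1 - x) * exp x" by (intro mult_right_mono) auto
    then have "1 \<ge> (1 - x) * exp x" by (simp add: exp_minus field_simps)
    then have "exp x \<le> 1 + x * exp x" by (simp add: algebra_simps)
    then have h: "0 \<le> (1 + x * exp x - exp x) / 2" by simp
    have eq: "(exp x + 1) / 2 + x / 2 * exp x - exp x = (1 + x * exp x - exp x) / 2" by (simp add: field_simps)
    have "0 \<le> (exp x + 1) / 2 + x / 2 * exp x - exp x" by (subst eq) (rule h)
    with d show "\<exists>y. (f has_real_derivative y) (at x) \<and> 0 \<le> y" by blast
  qed
  then show ?thesis unfolding f_def by simp
qed

lemma key_ineq:
  fixes r t :: real
  assumes r: "0 \<le> r" "r \<le> 1" and t: "t \<ge> 0"
  shows "(exp t - 1) * (r * (1 - r)) \<le> t / 4 * (1 + r * (exp t - 1))"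
proof -
  define z where "z = exp (t / 2)"
  have z1: "z \<ge> 1" unfolding z_def using t by simp
  have ez: "exp t = z^2" unfolding z_def by (simp add: power2_eq_square exp_add[symmetric])
  have tb: "(z - 1) \<le> t / 4 * (z + 1)" unfolding z_def using tanh_bd[of "t/2"] t by simp
  have sq: "(z + 1)^2 * (r * (1 - r)) \<le> 1 + r * (z^2 - 1)"
  proof -
    have "0 \<le> (1 - r * (z + 1))^2" by simp
    then show ?thesis by (simp add: power2_eq_square algebra_simps)
  qed
  have pos: "0 \<le> 1 + r * (z^2 - 1)" using r z1 by (simp add: mult_nonneg_nonneg)
  have "(z^2 - 1) * (r * (1 - r)) * (z + 1) = (z - 1) * ((z + 1)^2 * (r * (1 - r)))"
    by (simp add: power2_eq_square algebra_simps)
  also have "\<dots> \<le> (z - 1) * (1 + r * (z^2 - 1))"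
    using sq z1 by (intro mult_left_mono) auto
  also have "\<dots> \<le> t / 4 * (z + 1) * (1 + r * (z^2 - 1))"
    using tb pos by (intro mult_right_mono) auto
  finally have "(z^2 - 1) * (r * (1 - r)) * (z + 1) \<le> t / 4 * (1 + r * (z^2 - 1)) * (z + 1)"
    by (simp add: mult_ac)
  moreover have "z + 1 > 0" using z1 by simp
  ultimately have "(z^2 - 1) * (r * (1 - r)) \<le> t / 4 * (1 + r * (z^2 - 1))"
    by (rule mult_right_le_imp_le)
  then show ?thesis unfolding ez .
qed

lemma tilt:
  fixes R H :: "'c \<Rightarrow> real"
  assumes finC: "finite C" and aC: "a \<in> C" and Rpos: "\<forall>c\<in>C. R c > 0" and t: "t \<ge> 0"
    and HD: "\<forall>c1\<in>C. \<forall>c2\<in>C. \<bar>H c1 - H c2\<bar> \<le> D"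
  shows "\<bar>(\<Sum>c\<in>C. R c * exp (t * of_bool (c = a)) * H c) / (\<Sum>c\<in>C. R c * exp (t * of_bool (c = a)))
          - (\<Sum>c\<in>C. R c * H c) / (\<Sum>c\<in>C. R c)\<bar> \<le> t / 4 * D"
proof -
  define y where "y = exp t"
  define SR where "SR = (\<Sum>c\<in>C. R c)"
  define SH where "SH = (\<Sum>c\<in>C. R c * H c)"
  define Ra where "Ra = R a"
  have y1: "y \<ge> 1" unfolding y_def using t by simp
  have Ra: "Ra > 0" unfolding Ra_def using Rpos aC by auto
  have SRa: "Ra \<le> SR" unfolding SR_def Ra_def
    using member_le_sum[of a C R] aC Rpos finC by (auto simp: less_imp_le)
  have SR: "SR > 0" using Ra SRa by simp
  have D0: "D \<ge> 0" using HD aC by fastforce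
  have e1: "(\<Sum>c\<in>C. R c * exp (t * of_bool (c = a)) * H c) = SH + (y - 1) * Ra * H a"
  proof -
    have "(\<Sum>c\<in>C. R c * exp (t * of_bool (c = a)) * H c) = (\<Sum>c\<in>C. R c * H c + (if c = a then (y - 1) * Ra * H a else 0))"
      by (rule sum.cong) (auto simp: y_def Ra_def algebra_simps)
    also have "\<dots> = SH + (y - 1) * Ra * H a" unfolding SH_def using finC aC by (simp add: sum.distrib)
    finally show ?thesis .
  qed
  have e2: "(\<Sum>c\<in>C. R c * exp (t * of_bool (c = a))) = SR + (y - 1) * Ra"
  proof -
    have "(\<Sum>c\<in>C. R c * exp (t * of_bool (c = a))) = (\<Sum>c\<in>C. R c + (if c = a then (y - 1) * Ra else 0))"
      by (rule sum.cong) (auto simp: y_def Ra_def algebra_simps)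
    also have "\<dots> = SR + (y - 1) * Ra" unfolding SR_def using finC aC by (simp add: sum.distrib)
    finally show ?thesis .
  qed
  have den: "SR + (y - 1) * Ra > 0" using SR Ra y1 by (simp add: add_pos_nonneg)
  have diff: "(SH + (y - 1) * Ra * H a) / (SR + (y - 1) * Ra) - SH / SR
      = (y - 1) * Ra * (H a * SR - SH) / ((SR + (y - 1) * Ra) * SR)"
    using den SR by (simp add: field_simps)
  have bd: "\<bar>H a * SR - SH\<bar> \<le> (SR - Ra) * D"
  proof -
    have "H a * SR - SH = (\<Sum>c\<in>C. R c * (H a - H c))"
      unfolding SR_def SH_def by (simp add: sum_distrib_left sum_subtractf algebra_simps)
    then have "\<bar>H a * SR - SH\<bar> \<le> (\<Sum>c\<in>C. \<bar>R c * (H a - H c)\<bar>)" by (simp add: sum_abs)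
    also have "\<dots> \<le> (\<Sum>c\<in>C. R c * D - (if c = a then Ra * D else 0))"
    proof (rule sum_mono)
      fix c assume c: "c \<in> C"
      show "\<bar>R c * (H a - H c)\<bar> \<le> R c * D - (if c = a then Ra * D else 0)"
      proof (cases "c = a")
        case True then show ?thesis by (simp add: Ra_def)
      next
        case False
        have "R c > 0" using Rpos c by blast
        then have "\<bar>R c * (H a - H c)\<bar> = R c * \<bar>H a - H c\<bar>" by (simp add: abs_mult)
        also have "\<dots> \<le> R c * D" using HD c aC Rpos by (intro mult_left_mono) auto
        finally show ?thesis using False by simp
      qed
    qed
    also have "\<dots> = (SR - Ra) * D" unfolding SR_def using finC aC
      by (simp add: sum_subtractf sum_distrib_left[symmetric] algebra_simps)
    finally show ?thesis .
  qed
  have key: "(y - 1) * (Ra * (SR - Ra)) \<le> t / 4 * (SR * (SR + (y - 1) * Ra))"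
  proof -
    have "(exp t - 1) * ((Ra / SR) * (1 - Ra / SR)) \<le> t / 4 * (1 + (Ra / SR) * (exp t - 1))"
      by (rule key_ineq) (use Ra SR SRa t in auto)
    then have K2: "(exp t - 1) * ((Ra / SR) * (1 - Ra / SR)) * SR^2 \<le> t / 4 * (1 + (Ra / SR) * (exp t - 1)) * SR^2"
      by (intro mult_right_mono) auto
    have E1: "(exp t - 1) * ((Ra / SR) * (1 - Ra / SR)) * SR^2 = (y - 1) * (Ra * (SR - Ra))"
      using SR unfolding y_def by (simp add: power2_eq_square field_simps)
    have E2: "t / 4 * (1 + (Ra / SR) * (exp t - 1)) * SR^2 = t / 4 * (SR * (SR + (y - 1) * Ra))"
      using SR unfolding y_def by (simp add: power2_eq_square field_simps)
    have "(y - 1) * (Ra * (SR - Ra)) = (exp t - 1) * ((Ra / SR) * (1 - Ra / SR)) * SR^2" by (rule E1[symmetric])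
    also have "\<dots> \<le> t / 4 * (1 + (Ra / SR) * (exp t - 1)) * SR^2" by (rule K2)
    also have "\<dots> = t / 4 * (SR * (SR + (y - 1) * Ra))" by (rule E2)
    finally show ?thesis .
  qed
  have "\<bar>(y - 1) * Ra * (H a * SR - SH) / ((SR + (y - 1) * Ra) * SR)\<bar>
        = (y - 1) * Ra * \<bar>H a * SR - SH\<bar> / ((SR + (y - 1) * Ra) * SR)"
    using y1 Ra den SR by (simp add: abs_mult abs_divide)
  also have "\<dots> \<le> (y - 1) * Ra * ((SR - Ra) * D) / ((SR + (y - 1) * Ra) * SR)"
    using y1 Ra den SR bd by (intro divide_right_mono mult_left_mono) auto
  also have "\<dots> \<le> t / 4 * D"
  proof -
    have "(y - 1) * Ra * ((SR - Ra) * D) = ((y - 1) * (Ra * (SR - Ra))) * D" by (simp add: algebra_simps)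
    also have "\<dots> \<le> (t / 4 * (SR * (SR + (y - 1) * Ra))) * D" using key D0 by (rule mult_right_mono)
    finally have "(y - 1) * Ra * ((SR - Ra) * D) \<le> t / 4 * D * ((SR + (y - 1) * Ra) * SR)"
      by (simp add: mult_ac)
    then show ?thesis using den SR by (simp add: pos_divide_le_eq mult_pos_pos)
  qed
  finally have F: "\<bar>(y - 1) * Ra * (H a * SR - SH) / ((SR + (y - 1) * Ra) * SR)\<bar> \<le> t / 4 * D" .
  have SHd: "(\<Sum>c\<in>C. R c * H c) = SH" and SRd: "sum R C = SR" unfolding SH_def SR_def by simp_all
  show ?thesis unfolding e1 e2 SHd SRd diff by (rule F)
qed

lemma tv:
  fixes R H :: "'c \<Rightarrow> real"
  assumes finC: "finite C" and aC: "a \<in> C" and bC: "b \<in> C" and Rpos: "\<forall>c\<in>C. R c > 0" and t: "t \<ge> 0"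
    and HD: "\<forall>c1\<in>C. \<forall>c2\<in>C. \<bar>H c1 - H c2\<bar> \<le> D" and K: "K > 0"
    and W: "\<forall>c\<in>C. W c = R c * exp (t * of_bool (c = a))"
    and W': "\<forall>c\<in>C. W' c = K * (R c * exp (t * of_bool (c = b)))"
  shows "\<bar>(\<Sum>c\<in>C. W c * H c) / (\<Sum>c\<in>C. W c) - (\<Sum>c\<in>C. W' c * H c) / (\<Sum>c\<in>C. W' c)\<bar> \<le> t / 2 * D"
proof -
  have 1: "(\<Sum>c\<in>C. W c * H c) / (\<Sum>c\<in>C. W c) = (\<Sum>c\<in>C. R c * exp (t * of_bool (c = a)) * H c) / (\<Sum>c\<in>C. R c * exp (t * of_bool (c = a)))"
    using W by (simp cong: sum.cong)
  have "(\<Sum>c\<in>C. W' c * H c) = K * (\<Sum>c\<in>C. R c * exp (t * of_bool (c = b)) * H c)"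
    using W' by (simp add: sum_distrib_left mult_ac cong: sum.cong)
  moreover have "(\<Sum>c\<in>C. W' c) = K * (\<Sum>c\<in>C. R c * exp (t * of_bool (c = b)))"
    using W' by (simp add: sum_distrib_left cong: sum.cong)
  ultimately have 2: "(\<Sum>c\<in>C. W' c * H c) / (\<Sum>c\<in>C. W' c) = (\<Sum>c\<in>C. R c * exp (t * of_bool (c = b)) * H c) / (\<Sum>c\<in>C. R c * exp (t * of_bool (c = b)))"
    using K by simp
  have A: "\<bar>(\<Sum>c\<in>C. R c * exp (t * of_bool (c = a)) * H c) / (\<Sum>c\<in>C. R c * exp (t * of_bool (c = a)))
          - (\<Sum>c\<in>C. R c * H c) / (\<Sum>c\<in>C. R c)\<bar> \<le> t / 4 * D" by (rule tilt[OF finC aC Rpos t HD])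
  have B: "\<bar>(\<Sum>c\<in>C. R c * exp (t * of_bool (c = b)) * H c) / (\<Sum>c\<in>C. R c * exp (t * of_bool (c = b)))
          - (\<Sum>c\<in>C. R c * H c) / (\<Sum>c\<in>C. R c)\<bar> \<le> t / 4 * D" by (rule tilt[OF finC bC Rpos t HD])
  show ?thesis unfolding 1 2 using A B by linarith
qed

context sw begin

definition "Z v \<sigma> = (\<Sum>c\<in>{1..q}. w (\<sigma>(v := c)))"
definition "Pv v h \<sigma> = (\<Sum>c\<in>{1..q}. w (\<sigma>(v := c)) * h (\<sigma>(v := c))) / Z v \<sigma>"
definition "nn = real (card V)"
definition "Q h \<sigma> = (\<Sum>v\<in>V. Pv v h \<sigma>) / nn"
definition "ip f g = (\<Sum>\<sigma>\<in>Om. w \<sigma> * f \<sigma> * g \<sigma>)"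

lemma Z_pos: "Z v \<sigma> > 0"
  unfolding Z_def using q1 by (intro sum_pos) (auto simp: w_pos)

lemma Z_ne: "Z v \<sigma> \<noteq> 0" using Z_pos[of v \<sigma>] by simp

lemma Z_upd: "Z v (\<sigma>(v := c)) = Z v \<sigma>" unfolding Z_def by simp

lemma clOm: "v \<in> V \<Longrightarrow> \<forall>\<sigma>\<in>Om. \<forall>c\<in>{1..q}. \<sigma>(v := c) \<in> Om" using Om_upd by blast
lemma valOm: "v \<in> V \<Longrightarrow> \<forall>\<sigma>\<in>Om. \<sigma> v \<in> {1..q}" using Om_val by blast

lemma ip_Pv_expand: "ip h (Pv v g) = (\<Sum>\<sigma>\<in>Om. \<Sum>c\<in>{1..q}. w \<sigma> * w (\<sigma>(v := c)) / Z v \<sigma> * h \<sigma> * g (\<sigma>(v := c)))"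
  unfolding ip_def Pv_def by (rule sum.cong) (simp_all add: sum_distrib_left sum_divide_distrib mult_ac)

lemma Pv_self_adj: assumes v: "v \<in> V" shows "ip h (Pv v g) = ip g (Pv v h)"
proof -
  have "ip h (Pv v g) = (\<Sum>\<sigma>\<in>Om. \<Sum>c\<in>{1..q}. (\<lambda>\<sigma> \<tau>. w \<sigma> * w \<tau> / Z v \<sigma> * h \<sigma> * g \<tau>) \<sigma> (\<sigma>(v := c)))"
    unfolding ip_Pv_expand by simp
  also have "\<dots> = (\<Sum>\<sigma>\<in>Om. \<Sum>c\<in>{1..q}. (\<lambda>\<sigma> \<tau>. w \<sigma> * w \<tau> / Z v \<sigma> * h \<sigma> * g \<tau>) (\<sigma>(v := c)) \<sigma>)"
    by (rule fiber_swap[OF finOm clOm[OF v] valOm[OF v]])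
  also have "\<dots> = ip g (Pv v h)"
    unfolding ip_Pv_expand by (rule sum.cong[OF refl], rule sum.cong[OF refl]) (simp add: Z_upd mult_ac)
  finally show ?thesis .
qed

lemma Pv_one: "Pv v (\<lambda>_. 1) \<sigma> = 1"
  unfolding Pv_def using Z_pos[of v \<sigma>] unfolding Z_def by simp

lemma mean_Pv: assumes "v \<in> V" shows "(\<Sum>\<sigma>\<in>Om. w \<sigma> * Pv v g \<sigma>) = (\<Sum>\<sigma>\<in>Om. w \<sigma> * g \<sigma>)"
  using Pv_self_adj[OF assms, of "\<lambda>_. 1" g] unfolding ip_def Pv_one by simp

lemma ip_Q: "ip h (Q g) = (\<Sum>v\<in>V. ip h (Pv v g)) / nn"
  unfolding ip_def Q_def
  by (simp add: sum_divide_distrib sum_distrib_left sum.swap[of _ V] mult_ac)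

lemma Q_self_adj: "ip h (Q g) = ip g (Q h)"
  unfolding ip_Q using Pv_self_adj by (simp cong: sum.cong)

lemma mean_Q: assumes "V \<noteq> {}" shows "(\<Sum>\<sigma>\<in>Om. w \<sigma> * Q g \<sigma>) = (\<Sum>\<sigma>\<in>Om. w \<sigma> * g \<sigma>)"
proof -
  have "(\<Sum>\<sigma>\<in>Om. w \<sigma> * Q g \<sigma>) = ip (\<lambda>_. 1) (Q g)" unfolding ip_def by simp
  also have "\<dots> = (\<Sum>v\<in>V. ip (\<lambda>_. 1) (Pv v g)) / nn" by (rule ip_Q)
  also have "\<dots> = (\<Sum>v\<in>V. (\<Sum>\<sigma>\<in>Om. w \<sigma> * g \<sigma>)) / nn"
    using mean_Pv unfolding ip_def by (simp cong: sum.cong)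
  also have "\<dots> = (\<Sum>\<sigma>\<in>Om. w \<sigma> * g \<sigma>)" unfolding nn_def using assms finV by simp
  finally show ?thesis .
qed

lemma ME_agree:
  assumes "\<And>x. x \<noteq> v \<Longrightarrow> \<sigma> x = \<sigma>' x"
  shows "ME \<sigma> \<subseteq> ME \<sigma>' \<union> D v"
proof
  fix e assume e: "e \<in> ME \<sigma>"
  show "e \<in> ME \<sigma>' \<union> D v"
  proof (cases "fst (ends e) = v \<or> snd (ends e) = v")
    case True then show ?thesis using e unfolding D_def mono_edges_def by auto
  next
    case False then show ?thesis using e assms unfolding mono_edges_def by auto
  qed
qed

lemma w_upd_bd:
  assumes v: "v \<in> V"
  shows "w (\<sigma>(v := c)) \<le> exp (\<beta> * real Dl) * w (\<sigma>(v := c'))"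
proof -
  have "ME (\<sigma>(v := c)) \<subseteq> ME (\<sigma>(v := c')) \<union> D v" by (rule ME_agree) simp
  then have "card (ME (\<sigma>(v := c))) \<le> card (ME (\<sigma>(v := c')) \<union> D v)"
    by (rule card_mono[rotated]) (use finME finE in \<open>auto simp: D_def\<close>)
  also have "\<dots> \<le> card (ME (\<sigma>(v := c'))) + card (D v)" by (rule card_Un_le)
  finally have "real (card (ME (\<sigma>(v := c)))) \<le> real Dl + real (card (ME (\<sigma>(v := c'))))"
    using deg_le[OF v] by linarith
  then have "\<beta> * real (card (ME (\<sigma>(v := c)))) \<le> \<beta> * real Dl + \<beta> * real (card (ME (\<sigma>(v := c'))))"
    using beta by (metis distrib_left mult_left_mono)
  then show ?thesis unfolding w_def by (simp add: exp_add[symmetric])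
qed

lemma nu_bd:
  assumes v: "v \<in> V"
  shows "w (\<sigma>(v := c)) / Z v \<sigma> \<le> exp (\<beta> * real Dl) / real q"
proof -
  have "real q * w (\<sigma>(v := c)) = (\<Sum>c'\<in>{1..q}. w (\<sigma>(v := c)))" by simp
  also have "\<dots> \<le> (\<Sum>c'\<in>{1..q}. exp (\<beta> * real Dl) * w (\<sigma>(v := c')))"
    by (rule sum_mono) (rule w_upd_bd[OF v])
  also have "\<dots> = exp (\<beta> * real Dl) * Z v \<sigma>" unfolding Z_def by (simp add: sum_distrib_left)
  finally show ?thesis using Z_pos[of v \<sigma>] q1 by (simp add: field_simps)
qed

lemma Dir_Pv:
  assumes v: "v \<in> V"
  shows "ip h h - ip h (Pv v h) \<le> exp (\<beta> * real Dl) / (2 * real q) * Mloc v h"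
proof -
  define T where "T \<sigma> \<tau> = w \<sigma> * w \<tau> / Z v \<sigma> * h \<sigma> * (h \<sigma> - h \<tau>)" for \<sigma> \<tau>
  define S where "S = (\<Sum>\<sigma>\<in>Om. \<Sum>c\<in>{1..q}. T \<sigma> (\<sigma>(v := c)))"
  have one: "(\<Sum>c\<in>{1..q}. w (\<sigma>(v := c)) / Z v \<sigma>) = 1" for \<sigma>
    using Z_pos[of v \<sigma>] unfolding Z_def by (simp add: sum_divide_distrib[symmetric])
  have "ip h h = (\<Sum>\<sigma>\<in>Om. \<Sum>c\<in>{1..q}. w \<sigma> * w (\<sigma>(v := c)) / Z v \<sigma> * h \<sigma> * h \<sigma>)"
  proof -
    have "ip h h = (\<Sum>\<sigma>\<in>Om. w \<sigma> * h \<sigma> * h \<sigma> * (\<Sum>c\<in>{1..q}. w (\<sigma>(v := c)) / Z v \<sigma>))"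
      unfolding ip_def one by simp
    then show ?thesis by (simp add: sum_distrib_left mult_ac)
  qed
  then have E: "ip h h - ip h (Pv v h) = S"
    unfolding ip_Pv_expand S_def T_def
    by (simp add: sum_subtractf[symmetric] right_diff_distrib)
  have S2: "S = (\<Sum>\<sigma>\<in>Om. \<Sum>c\<in>{1..q}. T (\<sigma>(v := c)) \<sigma>)"
    unfolding S_def by (rule fiber_swap[OF finOm clOm[OF v] valOm[OF v]])
  have "2 * S = (\<Sum>\<sigma>\<in>Om. \<Sum>c\<in>{1..q}. T \<sigma> (\<sigma>(v := c)) + T (\<sigma>(v := c)) \<sigma>)"
    using S_def S2 by (simp add: sum.distrib)
  also have "\<dots> = (\<Sum>\<sigma>\<in>Om. \<Sum>c\<in>{1..q}. w \<sigma> * (w (\<sigma>(v := c)) / Z v \<sigma>) * (h \<sigma> - h (\<sigma>(v := c)))^2)"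
    unfolding T_def by (rule sum.cong[OF refl], rule sum.cong[OF refl]) (simp add: Z_upd Z_ne power2_eq_square field_simps)
  also have "\<dots> \<le> (\<Sum>\<sigma>\<in>Om. \<Sum>c\<in>{1..q}. w \<sigma> * (exp (\<beta> * real Dl) / real q) * (h \<sigma> - h (\<sigma>(v := c)))^2)"
    by (intro sum_mono mult_right_mono mult_left_mono nu_bd[OF v]) (auto simp: w_pos less_imp_le)
  also have "\<dots> = exp (\<beta> * real Dl) / real q * Mloc v h"
    unfolding Mloc_def by (simp add: sum_distrib_left mult_ac)
  finally show ?thesis using E by simp
qed

lemma Dir_Q:
  assumes "V \<noteq> {}"
  shows "nn * (ip h h - ip h (Q h)) \<le> exp (\<beta> * real Dl) / (2 * real q) * (\<Sum>v\<in>V. Mloc v h)"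
proof -
  have nn: "nn > 0" unfolding nn_def using assms finV by (simp add: card_gt_0_iff)
  have "nn * (ip h h - ip h (Q h)) = (\<Sum>v\<in>V. ip h h - ip h (Pv v h))"
    unfolding ip_Q using nn by (simp add: sum_subtractf nn_def right_diff_distrib)
  also have "\<dots> \<le> (\<Sum>v\<in>V. exp (\<beta> * real Dl) / (2 * real q) * Mloc v h)"
    by (rule sum_mono) (rule Dir_Pv)
  finally show ?thesis by (simp add: sum_distrib_left)
qed

end

context sw begin

definition "im \<rho> e = (of_bool (\<rho> (fst (ends e)) = \<rho> (snd (ends e))) :: real)"
definition "Bset u v = {e\<in>E. ends e = (u, v) \<or> ends e = (v, u)}"
definition "mm u v = real (card (Bset u v))"

lemma cardME_sum: "real (card (ME \<rho>)) = (\<Sum>e\<in>E. im \<rho> e)"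
proof -
  have "ME \<rho> = E \<inter> {e. \<rho> (fst (ends e)) = \<rho> (snd (ends e))}" unfolding mono_edges_def by auto
  moreover have "(\<Sum>e\<in>E. of_bool (\<rho> (fst (ends e)) = \<rho> (snd (ends e)))) = (real (card (E \<inter> {e. \<rho> (fst (ends e)) = \<rho> (snd (ends e))})))"
    by (rule sum_of_bool_eq[OF finE finE])
  ultimately show ?thesis unfolding im_def by simp
qed

lemma mm_sum: "mm u v = (\<Sum>e\<in>E. of_bool (e \<in> Bset u v))"
proof -
  have "Bset u v = E \<inter> {e. e \<in> Bset u v}" unfolding Bset_def by auto
  moreover have "(\<Sum>e\<in>E. of_bool (e \<in> Bset u v)) = (real (card (E \<inter> {e. e \<in> Bset u v})))"
    by (rule sum_of_bool_eq[OF finE finE])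
  ultimately show ?thesis unfolding mm_def by simp
qed

lemma edge_diff:
  assumes uv: "u \<noteq> v" and eE: "e \<in> E"
  shows "im ((\<sigma>(u := c))(v := c')) e - im (\<sigma>(v := c')) e
          - of_bool (e \<in> Bset u v) * (of_bool (c' = c) - of_bool (c' = \<sigma> u))
        = (if fst (ends e) = v \<or> snd (ends e) = v then 0 else im (\<sigma>(u := c)) e - im \<sigma> e)"
proof -
  obtain x y where xy: "ends e = (x, y)" by (cases "ends e")
  have B: "(e \<in> Bset u v) = ((x = u \<and> y = v) \<or> (x = v \<and> y = u))"
    unfolding Bset_def using xy eE by auto
  have i1: "im ((\<sigma>(u := c))(v := c')) e = of_bool (((\<sigma>(u := c))(v := c')) x = ((\<sigma>(u := c))(v := c')) y)"
    unfolding im_def xy by simp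
  have i2: "im (\<sigma>(v := c')) e = of_bool ((\<sigma>(v := c')) x = (\<sigma>(v := c')) y)"
    unfolding im_def xy by simp
  have i3: "im (\<sigma>(u := c)) e = of_bool ((\<sigma>(u := c)) x = (\<sigma>(u := c)) y)"
    unfolding im_def xy by simp
  have i4: "im \<sigma> e = of_bool (\<sigma> x = \<sigma> y)"
    unfolding im_def xy by simp
  have T: "(fst (ends e) = v \<or> snd (ends e) = v) = (x = v \<or> y = v)" unfolding xy by simp
  show ?thesis
    unfolding i1 i2 i3 i4 T B
    using uv by (cases "x = u"; cases "y = u"; cases "x = v"; cases "y = v") (auto simp: eq_commute)
qed

lemma card_shift:
  assumes uv: "u \<noteq> v"
  obtains \<kappa> where "\<And>c'. real (card (ME ((\<sigma>(u := c))(v := c'))))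
      = real (card (ME (\<sigma>(v := c')))) + mm u v * of_bool (c' = c) - mm u v * of_bool (c' = \<sigma> u) + \<kappa>"
proof -
  define \<kappa> where "\<kappa> = (\<Sum>e\<in>E. if fst (ends e) = v \<or> snd (ends e) = v then 0 else im (\<sigma>(u := c)) e - im \<sigma> e)"
  have "real (card (ME ((\<sigma>(u := c))(v := c'))))
      = real (card (ME (\<sigma>(v := c')))) + mm u v * of_bool (c' = c) - mm u v * of_bool (c' = \<sigma> u) + \<kappa>" for c'
  proof -
    have "real (card (ME ((\<sigma>(u := c))(v := c')))) - real (card (ME (\<sigma>(v := c'))))
        - mm u v * (of_bool (c' = c) - of_bool (c' = \<sigma> u))
        = (\<Sum>e\<in>E. im ((\<sigma>(u := c))(v := c')) e - im (\<sigma>(v := c')) e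
          - of_bool (e \<in> Bset u v) * (of_bool (c' = c) - of_bool (c' = \<sigma> u)))"
      unfolding cardME_sum mm_sum by (simp add: sum_subtractf sum_distrib_right)
    also have "\<dots> = \<kappa>" unfolding \<kappa>_def by (rule sum.cong[OF refl], rule edge_diff[OF uv])
    finally show ?thesis by (simp add: algebra_simps)
  qed
  then show ?thesis by (rule that)
qed

definition "lipd h d = (\<forall>u\<in>V. \<forall>\<sigma>\<in>Om. \<forall>c\<in>{1..q}. \<bar>h \<sigma> - h (\<sigma>(u := c))\<bar> \<le> d u)"

lemma lipdD: "lipd h d \<Longrightarrow> u \<in> V \<Longrightarrow> \<sigma> \<in> Om \<Longrightarrow> c \<in> {1..q} \<Longrightarrow> \<bar>h \<sigma> - h (\<sigma>(u := c))\<bar> \<le> d u"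
  unfolding lipd_def by blast

lemma Pv_lip:
  assumes L: "lipd h d" and u: "u \<in> V" and v: "v \<in> V" and uv: "u \<noteq> v"
    and s: "\<sigma> \<in> Om" and c: "c \<in> {1..q}"
  shows "\<bar>Pv v h \<sigma> - Pv v h (\<sigma>(u := c))\<bar> \<le> d u + \<beta> * mm u v / 2 * d v"
proof -
  define \<sigma>' where "\<sigma>' = \<sigma>(u := c)"
  have s': "\<sigma>' \<in> Om" unfolding \<sigma>'_def using Om_upd[OF s u c] .
  define W where "W c' = w (\<sigma>(v := c'))" for c'
  define W' where "W' c' = w (\<sigma>'(v := c'))" for c'
  define H where "H c' = h (\<sigma>(v := c'))" for c'
  define H' where "H' c' = h (\<sigma>'(v := c'))" for c'
  have P1: "Pv v h \<sigma> = (\<Sum>c'\<in>{1..q}. W c' * H c') / (\<Sum>c'\<in>{1..q}. W c')"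
    unfolding Pv_def Z_def W_def H_def ..
  have P2: "Pv v h \<sigma>' = (\<Sum>c'\<in>{1..q}. W' c' * H' c') / (\<Sum>c'\<in>{1..q}. W' c')"
    unfolding Pv_def Z_def W'_def H'_def ..
  have SW: "(\<Sum>c'\<in>{1..q}. W c') > 0" unfolding W_def using q1 by (intro sum_pos) (auto simp: w_pos)
  have A1: "\<bar>(\<Sum>c'\<in>{1..q}. W c' * H c') / (\<Sum>c'\<in>{1..q}. W c') - (\<Sum>c'\<in>{1..q}. W c' * H' c') / (\<Sum>c'\<in>{1..q}. W c')\<bar> \<le> d u"
  proof -
    have "\<bar>(\<Sum>c'\<in>{1..q}. W c' * H c') - (\<Sum>c'\<in>{1..q}. W c' * H' c')\<bar> = \<bar>\<Sum>c'\<in>{1..q}. W c' * (H c' - H' c')\<bar>"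
      by (simp only: sum_subtractf right_diff_distrib)
    also have "\<dots> \<le> (\<Sum>c'\<in>{1..q}. \<bar>W c' * (H c' - H' c')\<bar>)" by (rule sum_abs)
    also have "\<dots> \<le> (\<Sum>c'\<in>{1..q}. W c' * d u)"
    proof (rule sum_mono)
      fix c' assume c': "c' \<in> {1..q}"
      have eq: "\<sigma>'(v := c') = (\<sigma>(v := c'))(u := c)" unfolding \<sigma>'_def using uv by (simp add: fun_upd_twist)
      have "\<sigma>(v := c') \<in> Om" using Om_upd[OF s v c'] .
      then have "\<bar>h (\<sigma>(v := c')) - h ((\<sigma>(v := c'))(u := c))\<bar> \<le> d u" by (rule lipdD[OF L u _ c])
      then have "\<bar>H c' - H' c'\<bar> \<le> d u" unfolding H_def H'_def eq .
      moreover have Wp: "W c' > 0" unfolding W_def by (rule w_pos)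
      ultimately have "W c' * \<bar>H c' - H' c'\<bar> \<le> W c' * d u" by (intro mult_left_mono) auto
      then show "\<bar>W c' * (H c' - H' c')\<bar> \<le> W c' * d u" using Wp by (simp add: abs_mult)
    qed
    also have "\<dots> = d u * (\<Sum>c'\<in>{1..q}. W c')" by (subst sum_distrib_left) (simp add: mult_ac)
    finally have "\<bar>(\<Sum>c'\<in>{1..q}. W c' * H c') - (\<Sum>c'\<in>{1..q}. W c' * H' c')\<bar> \<le> d u * (\<Sum>c'\<in>{1..q}. W c')" .
    then show ?thesis using SW by (simp add: diff_divide_distrib[symmetric] abs_divide pos_divide_le_eq)
  qed
  obtain \<kappa> where kap: "\<And>c'. real (card (ME (\<sigma>'(v := c'))))
      = real (card (ME (\<sigma>(v := c')))) + mm u v * of_bool (c' = c) - mm u v * of_bool (c' = \<sigma> u) + \<kappa>"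
    using card_shift[OF uv, of \<sigma> c] unfolding \<sigma>'_def by blast
  define t where "t = \<beta> * mm u v"
  define R where "R c' = exp (\<beta> * real (card (ME (\<sigma>(v := c')))) - t * of_bool (c' = \<sigma> u))" for c'
  have A2: "\<bar>(\<Sum>c'\<in>{1..q}. W c' * H' c') / (\<Sum>c'\<in>{1..q}. W c') - (\<Sum>c'\<in>{1..q}. W' c' * H' c') / (\<Sum>c'\<in>{1..q}. W' c')\<bar>
      \<le> t / 2 * d v"
  proof (rule tv[where R=R and K="exp (\<beta> * \<kappa>)" and a="\<sigma> u" and b=c])
    show "finite {1..q}" by simp
    show "\<sigma> u \<in> {1..q}" using Om_val[OF s u] .
    show "c \<in> {1..q}" by (rule c)
    show "\<forall>c\<in>{1..q}. 0 < R c" unfolding R_def by simp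
    show "0 \<le> t" unfolding t_def mm_def using beta by simp
    show "\<forall>c1\<in>{1..q}. \<forall>c2\<in>{1..q}. \<bar>H' c1 - H' c2\<bar> \<le> d v"
    proof (intro ballI)
      fix c1 c2 assume c1: "c1 \<in> {1..q}" and c2: "c2 \<in> {1..q}"
      have "\<sigma>'(v := c1) \<in> Om" using Om_upd[OF s' v c1] .
      then have "\<bar>h (\<sigma>'(v := c1)) - h ((\<sigma>'(v := c1))(v := c2))\<bar> \<le> d v" by (rule lipdD[OF L v _ c2])
      then show "\<bar>H' c1 - H' c2\<bar> \<le> d v" unfolding H'_def by simp
    qed
    show "0 < exp (\<beta> * \<kappa>)" by simp
    show "\<forall>c\<in>{1..q}. W c = R c * exp (t * of_bool (c = \<sigma> u))"
    proof
      fix c' assume "c' \<in> {1..q}"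
      have "R c' * exp (t * of_bool (c' = \<sigma> u)) = exp (\<beta> * real (card (ME (\<sigma>(v := c')))) - t * of_bool (c' = \<sigma> u) + t * of_bool (c' = \<sigma> u))"
        unfolding R_def by (rule exp_add[symmetric])
      then have "R c' * exp (t * of_bool (c' = \<sigma> u)) = exp (\<beta> * real (card (ME (\<sigma>(v := c')))))"
        by (simp only: diff_add_cancel)
      then show "W c' = R c' * exp (t * of_bool (c' = \<sigma> u))" unfolding W_def w_def by (rule sym)
    qed
    show "\<forall>c'\<in>{1..q}. W' c' = exp (\<beta> * \<kappa>) * (R c' * exp (t * of_bool (c' = c)))"
    proof
      fix c' assume "c' \<in> {1..q}"
      have gen: "\<beta> * (X + m * a - m * b + k) = \<beta> * k + ((\<beta> * X - (\<beta> * m) * b) + (\<beta> * m) * a)"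
        for X m a b k :: real by (simp add: algebra_simps)
      have "\<beta> * real (card (ME (\<sigma>'(v := c')))) = \<beta> * (real (card (ME (\<sigma>(v := c')))) + mm u v * of_bool (c' = c) - mm u v * of_bool (c' = \<sigma> u) + \<kappa>)"
        by (simp only: kap)
      also have "\<dots> = \<beta> * \<kappa> + ((\<beta> * real (card (ME (\<sigma>(v := c')))) - t * of_bool (c' = \<sigma> u)) + t * of_bool (c' = c))"
        unfolding t_def by (rule gen)
      finally have "\<beta> * real (card (ME (\<sigma>'(v := c')))) =
          \<beta> * \<kappa> + ((\<beta> * real (card (ME (\<sigma>(v := c')))) - t * of_bool (c' = \<sigma> u)) + t * of_bool (c' = c))" .
      then have "exp (\<beta> * real (card (ME (\<sigma>'(v := c'))))) = exp (\<beta> * \<kappa>) * (exp (\<beta> * real (card (ME (\<sigma>(v := c')))) - t * of_bool (c' = \<sigma> u)) * exp (t * of_bool (c' = c)))"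
        by (simp only: exp_add)
      then show "W' c' = exp (\<beta> * \<kappa>) * (R c' * exp (t * of_bool (c' = c)))"
        unfolding W'_def R_def w_def .
    qed
  qed
  define X where "X = (\<Sum>c'\<in>{1..q}. W c' * H c') / (\<Sum>c'\<in>{1..q}. W c')"
  define Y where "Y = (\<Sum>c'\<in>{1..q}. W c' * H' c') / (\<Sum>c'\<in>{1..q}. W c')"
  define Z' where "Z' = (\<Sum>c'\<in>{1..q}. W' c' * H' c') / (\<Sum>c'\<in>{1..q}. W' c')"
  have a1: "\<bar>X - Y\<bar> \<le> d u" using A1 unfolding X_def Y_def .
  have a2: "\<bar>Y - Z'\<bar> \<le> t / 2 * d v" using A2 unfolding Y_def Z'_def .
  have p1: "Pv v h \<sigma> = X" using P1 unfolding X_def .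
  have p2: "Pv v h \<sigma>' = Z'" using P2 unfolding Z'_def .
  have "\<bar>Pv v h \<sigma> - Pv v h \<sigma>'\<bar> \<le> d u + t / 2 * d v"
    unfolding p1 p2 using a1 a2 by linarith
  then show ?thesis unfolding \<sigma>'_def t_def .
qed

end

lemma logconv:
  fixes b :: "nat \<Rightarrow> real"
  assumes nn: "\<And>k. b k \<ge> 0" and lc: "\<And>k. (b (Suc k))^2 \<le> b k * b (Suc (Suc k))"
    and bd: "\<And>k. b k \<le> C * \<rho> ^ k" and rho: "\<rho> \<ge> 0"
  shows "b 1 \<le> \<rho> * b 0"
proof (rule ccontr)
  assume H: "\<not> b 1 \<le> \<rho> * b 0"
  show False
  proof (cases "b 0 = 0")
    case True
    have "(b 1)^2 \<le> 0" using lc[of 0] True by simp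
    then have "b 1 = 0" by simp
    then show False using H True by simp
  next
    case False
    then have b0: "b 0 > 0" using nn[of 0] by simp
    have P: "b 1 * b k \<le> b 0 * b (Suc k)" for k
    proof (induction k)
      case 0 then show ?case by (simp add: mult.commute)
    next
      case (Suc k)
      show ?case
      proof (cases "b (Suc k) = 0")
        case True then show ?thesis using nn b0 by simp
      next
        case False
        then have pos: "b (Suc k) > 0" using nn[of "Suc k"] by simp
        have "b 1 * b (Suc k) * b (Suc k) \<le> b 1 * (b k * b (Suc (Suc k)))"
          using lc[of k] nn[of 1] by (simp add: power2_eq_square mult.assoc mult_left_mono)
        also have "\<dots> = (b 1 * b k) * b (Suc (Suc k))" by (simp add: mult.assoc)
        also have "\<dots> \<le> (b 0 * b (Suc k)) * b (Suc (Suc k))"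
          using Suc.IH nn by (intro mult_right_mono) auto
        finally have "(b 1 * b (Suc k)) * b (Suc k) \<le> (b 0 * b (Suc (Suc k))) * b (Suc k)"
          by (simp add: mult_ac)
        then show ?thesis using pos by (simp add: mult_le_cancel_right)
      qed
    qed
    have Q: "b 1 ^ k * b 0 \<le> b 0 ^ k * b k" for k
    proof (induction k)
      case 0 then show ?case by simp
    next
      case (Suc k)
      have "b 1 ^ Suc k * b 0 = b 1 * (b 1 ^ k * b 0)" by simp
      also have "\<dots> \<le> b 1 * (b 0 ^ k * b k)" using Suc.IH nn[of 1] by (rule mult_left_mono)
      also have "\<dots> = b 0 ^ k * (b 1 * b k)" by (simp add: mult_ac)
      also have "\<dots> \<le> b 0 ^ k * (b 0 * b (Suc k))" using P[of k] b0 by (intro mult_left_mono) auto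
      also have "\<dots> = b 0 ^ Suc k * b (Suc k)" by (simp add: mult_ac)
      finally show ?case .
    qed
    define r where "r = b 1 / b 0"
    have r: "r > \<rho>" using H b0 unfolding r_def by (simp add: field_simps)
    have rk: "r ^ k \<le> C * \<rho> ^ k / b 0" for k
    proof -
      have "b 1 ^ k * b 0 \<le> b 0 ^ k * (C * \<rho> ^ k)"
        using Q[of k] bd[of k] b0 by (meson dual_order.trans mult_left_mono zero_le_power less_imp_le)
      then have "(b 1 / b 0) ^ k * b 0 ^ k * b 0 \<le> b 0 ^ k * (C * \<rho> ^ k)"
        using b0 by (simp add: power_divide)
      then have "(b 1 / b 0) ^ k * b 0 \<le> C * \<rho> ^ k"
        using b0 by (simp add: mult_ac mult_le_cancel_left_pos)
      then show ?thesis unfolding r_def using b0 by (simp add: field_simps)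
    qed
    show False
    proof (cases "\<rho> = 0")
      case True
      have "r ^ 1 \<le> 0" using rk[of 1] True by simp
      then show False using r True by simp
    next
      case False
      then have rp: "\<rho> > 0" using rho by simp
      have "1 < r / \<rho>" using r rp by (simp add: field_simps)
      then obtain k where k: "C / b 0 < (r / \<rho>) ^ k" using real_arch_pow by blast
      have "(r / \<rho>) ^ k = r ^ k / \<rho> ^ k" by (simp add: power_divide)
      also have "\<dots> \<le> (C * \<rho> ^ k / b 0) / \<rho> ^ k" using rk[of k] rp by (intro divide_right_mono) auto
      also have "\<dots> = C / b 0" using rp by simp
      finally show False using k by simp
    qed
  qed
qed

context sw begin

definition "Td d u = (1 - 1 / nn) * d u + (1 / nn) * (\<Sum>v\<in>V - {u}. \<beta> * mm u v / 2 * d v)"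

lemma nn_ge1: "V \<noteq> {} \<Longrightarrow> nn \<ge> 1"
  unfolding nn_def using finV by (simp add: Suc_le_eq card_gt_0_iff)

lemma Pv_same: "Pv u h (\<sigma>(u := c)) = Pv u h \<sigma>"
  unfolding Pv_def Z_def by simp

lemma Q_lip:
  assumes L: "lipd h d" and V: "V \<noteq> {}"
  shows "lipd (Q h) (Td d)"
  unfolding lipd_def
proof (intro ballI)
  fix u \<sigma> c assume u: "u \<in> V" and s: "\<sigma> \<in> Om" and c: "c \<in> {1..q}"
  have n1: "nn \<ge> 1" using nn_ge1[OF V] .
  have "(\<Sum>v\<in>V. Pv v h \<sigma> - Pv v h (\<sigma>(u := c))) = (Pv u h \<sigma> - Pv u h (\<sigma>(u := c))) + (\<Sum>v\<in>V - {u}. Pv v h \<sigma> - Pv v h (\<sigma>(u := c)))"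
    using finV u by (rule sum.remove)
  also have "\<dots> = (\<Sum>v\<in>V - {u}. Pv v h \<sigma> - Pv v h (\<sigma>(u := c)))" by (simp add: Pv_same)
  finally have e: "(\<Sum>v\<in>V. Pv v h \<sigma> - Pv v h (\<sigma>(u := c))) = (\<Sum>v\<in>V - {u}. Pv v h \<sigma> - Pv v h (\<sigma>(u := c)))" .
  have "\<bar>\<Sum>v\<in>V - {u}. Pv v h \<sigma> - Pv v h (\<sigma>(u := c))\<bar> \<le> (\<Sum>v\<in>V - {u}. \<bar>Pv v h \<sigma> - Pv v h (\<sigma>(u := c))\<bar>)"
    by (rule sum_abs)
  also have "\<dots> \<le> (\<Sum>v\<in>V - {u}. d u + \<beta> * mm u v / 2 * d v)"
    by (rule sum_mono) (rule Pv_lip[OF L u _ _ s c]; auto)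
  also have "\<dots> = (nn - 1) * d u + (\<Sum>v\<in>V - {u}. \<beta> * mm u v / 2 * d v)"
  proof -
    have "V \<noteq> {}" using u by blast
    then have "0 < card V" using finV by (simp add: card_gt_0_iff)
    then have c1: "1 \<le> card V" by simp
    have "real (card (V - {u})) = nn - 1"
      unfolding nn_def using finV u c1 by (simp add: card_Diff_singleton of_nat_diff)
    moreover have "(\<Sum>v\<in>V - {u}. d u + \<beta> * mm u v / 2 * d v) = real (card (V - {u})) * d u + (\<Sum>v\<in>V - {u}. \<beta> * mm u v / 2 * d v)"
      by (simp only: sum.distrib sum_constant)
    ultimately show ?thesis by (simp only:)
  qed
  finally have b: "\<bar>\<Sum>v\<in>V. Pv v h \<sigma> - Pv v h (\<sigma>(u := c))\<bar> \<le> (nn - 1) * d u + (\<Sum>v\<in>V - {u}. \<beta> * mm u v / 2 * d v)"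
    unfolding e .
  have "Q h \<sigma> - Q h (\<sigma>(u := c)) = (\<Sum>v\<in>V. Pv v h \<sigma> - Pv v h (\<sigma>(u := c))) / nn"
    unfolding Q_def by (simp add: sum_subtractf diff_divide_distrib)
  then have "\<bar>Q h \<sigma> - Q h (\<sigma>(u := c))\<bar> = \<bar>\<Sum>v\<in>V. Pv v h \<sigma> - Pv v h (\<sigma>(u := c))\<bar> / nn"
    using n1 by (simp add: abs_divide)
  also have "\<dots> \<le> ((nn - 1) * d u + (\<Sum>v\<in>V - {u}. \<beta> * mm u v / 2 * d v)) / nn"
    using b n1 by (intro divide_right_mono) auto
  also have "\<dots> = Td d u" unfolding Td_def using n1 by (simp add: field_simps)
  finally show "\<bar>Q h \<sigma> - Q h (\<sigma>(u := c))\<bar> \<le> Td d u" .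
qed

lemma Bset_sub: "Bset u v \<subseteq> D v" unfolding Bset_def D_def by auto

lemma mm_sum_le: assumes v: "v \<in> V" shows "(\<Sum>u\<in>V - {v}. mm u v) \<le> real Dl"
proof -
  have disj: "\<forall>i\<in>V - {v}. \<forall>j\<in>V - {v}. i \<noteq> j \<longrightarrow> Bset i v \<inter> Bset j v = {}"
    unfolding Bset_def by auto
  have fin: "\<forall>i\<in>V - {v}. finite (Bset i v)" unfolding Bset_def using finE by auto
  have "(\<Sum>u\<in>V - {v}. card (Bset u v)) = card (\<Union>u\<in>V - {v}. Bset u v)"
    using card_UN_disjoint[OF _ fin disj] finV by simp
  also have "\<dots> \<le> card (D v)"
    by (rule card_mono) (use finE Bset_sub in \<open>auto simp: D_def\<close>)
  also have "\<dots> \<le> Dl" by (rule deg_le[OF v])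
  finally show ?thesis unfolding mm_def by (simp flip: of_nat_sum)
qed

lemma sum_offdiag_swap:
  fixes g :: "'v \<Rightarrow> 'v \<Rightarrow> real"
  shows "(\<Sum>u\<in>V. \<Sum>v\<in>V - {u}. g u v) = (\<Sum>v\<in>V. \<Sum>u\<in>V - {v}. g u v)"
proof -
  have a: "(\<Sum>v\<in>V - {u}. g u v) = (\<Sum>v\<in>V. if v \<noteq> u then g u v else 0)" for u
  proof -
    have "V - {u} = {v\<in>V. v \<noteq> u}" by auto
    then show ?thesis using sum.inter_filter[OF finV, of "g u" "\<lambda>v. v \<noteq> u"] by simp
  qed
  have b: "(\<Sum>u\<in>V - {v}. g u v) = (\<Sum>u\<in>V. if v \<noteq> u then g u v else 0)" for v
  proof -
    have "V - {v} = {u\<in>V. v \<noteq> u}" by auto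
    then show ?thesis using sum.inter_filter[OF finV, of "\<lambda>u. g u v" "\<lambda>u. v \<noteq> u"] by simp
  qed
  show ?thesis unfolding a b by (rule sum.swap)
qed

lemma Td_sum:
  assumes V: "V \<noteq> {}" and d0: "\<And>u. d u \<ge> 0"
  shows "(\<Sum>u\<in>V. Td d u) \<le> (1 - (1 - \<beta> * real Dl / 2) / nn) * (\<Sum>u\<in>V. d u)"
proof -
  have n1: "nn \<ge> 1" using nn_ge1[OF V] .
  have "(\<Sum>u\<in>V. \<Sum>v\<in>V - {u}. \<beta> * mm u v / 2 * d v) = (\<Sum>v\<in>V. \<Sum>u\<in>V - {v}. \<beta> * mm u v / 2 * d v)"
    by (rule sum_offdiag_swap)
  also have "\<dots> = (\<Sum>v\<in>V. \<beta> / 2 * d v * (\<Sum>u\<in>V - {v}. mm u v))"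
    by (simp add: sum_distrib_left mult_ac)
  also have "\<dots> \<le> (\<Sum>v\<in>V. \<beta> / 2 * d v * real Dl)"
    by (rule sum_mono) (use mm_sum_le beta d0 in \<open>auto intro!: mult_left_mono\<close>)
  also have "(\<Sum>v\<in>V. \<beta> / 2 * d v * real Dl) = \<beta> * real Dl / 2 * (\<Sum>u\<in>V. d u)"
    by (subst sum_distrib_left) (rule sum.cong, simp_all add: mult_ac)
  finally have X: "(\<Sum>u\<in>V. \<Sum>v\<in>V - {u}. \<beta> * mm u v / 2 * d v) \<le> \<beta> * real Dl / 2 * (\<Sum>u\<in>V. d u)" .
  have "(\<Sum>u\<in>V. Td d u) = (1 - 1 / nn) * (\<Sum>u\<in>V. d u) + (1 / nn) * (\<Sum>u\<in>V. \<Sum>v\<in>V - {u}. \<beta> * mm u v / 2 * d v)"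
    unfolding Td_def by (simp add: sum.distrib sum_distrib_left)
  also have "\<dots> \<le> (1 - 1 / nn) * (\<Sum>u\<in>V. d u) + (1 / nn) * (\<beta> * real Dl / 2 * (\<Sum>u\<in>V. d u))"
    using X n1 by (intro add_left_mono mult_left_mono) auto
  also have "\<dots> = (1 - (1 - \<beta> * real Dl / 2) / nn) * (\<Sum>u\<in>V. d u)"
    using n1 by (simp add: field_simps)
  finally show ?thesis .
qed

lemma Td_nonneg:
  assumes V: "V \<noteq> {}" and d0: "\<And>u. d u \<ge> 0"
  shows "Td d u \<ge> 0"
proof -
  have n1: "nn \<ge> 1" using nn_ge1[OF V] .
  have "(\<Sum>v\<in>V - {u}. \<beta> * mm u v / 2 * d v) \<ge> 0"
    using beta d0 by (intro sum_nonneg) (simp add: mm_def)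
  moreover have "1 - 1 / nn \<ge> 0" using n1 by (simp add: field_simps)
  then have "(1 - 1 / nn) * d u \<ge> 0" using d0[of u] by (rule mult_nonneg_nonneg)
  ultimately show ?thesis unfolding Td_def using n1 by simp
qed

end

context sw begin

definition "kap = 1 - (1 - \<beta> * real Dl / 2) / nn"

lemma kap_nonneg: "V \<noteq> {} \<Longrightarrow> kap \<ge> 0"
proof -
  assume V: "V \<noteq> {}"
  have n1: "nn \<ge> 1" using nn_ge1[OF V] .
  have "(1 - \<beta> * real Dl / 2) / nn \<le> 1 / nn"
    using beta n1 by (intro divide_right_mono) auto
  also have "\<dots> \<le> 1" using n1 by simp
  finally show ?thesis unfolding kap_def by simp
qed

lemma lipd_iter:
  assumes L: "lipd h d" and d0: "\<And>u. d u \<ge> 0" and V: "V \<noteq> {}"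
  shows "lipd ((Q ^^ k) h) ((Td ^^ k) d) \<and> (\<forall>u. (Td ^^ k) d u \<ge> 0)"
proof (induction k)
  case 0 then show ?case using L d0 by simp
next
  case (Suc k)
  then have a: "lipd ((Q ^^ k) h) ((Td ^^ k) d)" and b: "\<And>u. (Td ^^ k) d u \<ge> 0" by auto
  have "lipd (Q ((Q ^^ k) h)) (Td ((Td ^^ k) d))" by (rule Q_lip[OF a V])
  moreover have "\<forall>u. Td ((Td ^^ k) d) u \<ge> 0" using Td_nonneg[OF V, where d="(Td ^^ k) d"] b by blast
  ultimately show ?case by simp
qed

lemma Td_iter_sum:
  assumes d0: "\<And>u. d u \<ge> 0" and V: "V \<noteq> {}"
  shows "(\<Sum>u\<in>V. (Td ^^ k) d u) \<le> kap ^ k * (\<Sum>u\<in>V. d u)"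
proof (induction k)
  case 0 then show ?case by simp
next
  case (Suc k)
  have nn0: "\<And>u. (Td ^^ k) d u \<ge> 0"
  proof (induction k)
    case 0 then show ?case using d0 by simp
  next
    case (Suc k) then show ?case using Td_nonneg[OF V, where d="(Td ^^ k) d"] by simp
  qed
  have "(\<Sum>u\<in>V. (Td ^^ Suc k) d u) = (\<Sum>u\<in>V. Td ((Td ^^ k) d) u)" by simp
  also have "\<dots> \<le> kap * (\<Sum>u\<in>V. (Td ^^ k) d u)"
    unfolding kap_def by (rule Td_sum[OF V nn0])
  also have "\<dots> \<le> kap * (kap ^ k * (\<Sum>u\<in>V. d u))"
    using Suc.IH kap_nonneg[OF V] by (rule mult_left_mono)
  finally show ?case by simp
qed

lemma path_gen:
  fixes g :: "('v \<Rightarrow> nat) \<Rightarrow> real"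
  assumes L: "lipd g d" and fin: "finite U"
  shows "U \<subseteq> V \<Longrightarrow> \<forall>\<sigma>\<in>Om. \<forall>\<sigma>'\<in>Om. (\<forall>x\<in>V - U. \<sigma> x = \<sigma>' x) \<longrightarrow> \<bar>g \<sigma> - g \<sigma>'\<bar> \<le> (\<Sum>u\<in>U. d u)"
  using fin
proof (induction U rule: finite_induct)
  case empty
  show ?case
  proof (intro ballI impI)
    fix \<sigma> \<sigma>' assume s: "\<sigma> \<in> Om" and s': "\<sigma>' \<in> Om" and ag: "\<forall>x\<in>V - {}. \<sigma> x = \<sigma>' x"
    have "\<sigma> = \<sigma>'"
    proof
      fix x show "\<sigma> x = \<sigma>' x"
      proof (cases "x \<in> V")
        case True then show ?thesis using ag by simp
      next
        case False then show ?thesis using s s' unfolding potts_configs_def by (simp add: PiE_def extensional_def)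
      qed
    qed
    then have "g \<sigma> - g \<sigma>' = 0" by simp
    then show "\<bar>g \<sigma> - g \<sigma>'\<bar> \<le> (\<Sum>u\<in>{}. d u)" by (simp only: abs_zero sum.empty order_refl)
  qed
next
  case (insert u U)
  have uV: "u \<in> V" and UV: "U \<subseteq> V" using insert.prems by auto
  show ?case
  proof (intro ballI impI)
    fix \<sigma> \<sigma>' assume s: "\<sigma> \<in> Om" and s': "\<sigma>' \<in> Om" and ag: "\<forall>x\<in>V - insert u U. \<sigma> x = \<sigma>' x"
    define \<sigma>'' where "\<sigma>'' = \<sigma>(u := \<sigma>' u)"
    have cu: "\<sigma>' u \<in> {1..q}" using Om_val[OF s' uV] .
    have s'': "\<sigma>'' \<in> Om" unfolding \<sigma>''_def by (rule Om_upd[OF s uV cu])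
    have ag2: "\<forall>x\<in>V - U. \<sigma>'' x = \<sigma>' x" unfolding \<sigma>''_def using ag by auto
    have "\<bar>g \<sigma>'' - g \<sigma>'\<bar> \<le> (\<Sum>u\<in>U. d u)" using insert.IH[OF UV] s'' s' ag2 by blast
    moreover have "\<bar>g \<sigma> - g \<sigma>''\<bar> \<le> d u" unfolding \<sigma>''_def by (rule lipdD[OF L uV s cu])
    ultimately have "\<bar>g \<sigma> - g \<sigma>'\<bar> \<le> d u + (\<Sum>u\<in>U. d u)" by linarith
    then show "\<bar>g \<sigma> - g \<sigma>'\<bar> \<le> (\<Sum>u\<in>insert u U. d u)" using insert.hyps by simp
  qed
qed

lemma path:
  fixes g :: "('v \<Rightarrow> nat) \<Rightarrow> real"
  assumes L: "lipd g d" and s: "\<sigma> \<in> Om" and s': "\<sigma>' \<in> Om"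
  shows "\<bar>g \<sigma> - g \<sigma>'\<bar> \<le> (\<Sum>u\<in>V. d u)"
  using path_gen[OF L finV] s s' by blast

lemma meanzero_bd:
  assumes mz: "(\<Sum>\<sigma>\<in>Om. w \<sigma> * g \<sigma>) = 0" and M: "\<forall>\<sigma>\<in>Om. \<forall>\<tau>\<in>Om. \<bar>g \<sigma> - g \<tau>\<bar> \<le> M"
    and s: "\<sigma> \<in> Om"
  shows "\<bar>g \<sigma>\<bar> \<le> M"
proof -
  define W where "W = (\<Sum>\<tau>\<in>Om. w \<tau>)"
  have W: "W > 0" unfolding W_def using s finOm by (intro sum_pos2[of _ \<sigma>]) (auto simp: w_pos less_imp_le)
  have "(\<Sum>\<tau>\<in>Om. w \<tau> * (g \<sigma> - g \<tau>)) = (\<Sum>\<tau>\<in>Om. w \<tau> * g \<sigma>) - (\<Sum>\<tau>\<in>Om. w \<tau> * g \<tau>)"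
    by (simp only: right_diff_distrib sum_subtractf)
  also have "\<dots> = g \<sigma> * W" unfolding W_def mz by (simp add: sum_distrib_left mult.commute)
  finally have "g \<sigma> * W = (\<Sum>\<tau>\<in>Om. w \<tau> * (g \<sigma> - g \<tau>))" by simp
  moreover have aw: "\<bar>g \<sigma> * W\<bar> = \<bar>g \<sigma>\<bar> * W" using W by (simp add: abs_mult)
  ultimately have "\<bar>g \<sigma>\<bar> * W = \<bar>\<Sum>\<tau>\<in>Om. w \<tau> * (g \<sigma> - g \<tau>)\<bar>" by simp
  also have "\<dots> \<le> (\<Sum>\<tau>\<in>Om. \<bar>w \<tau> * (g \<sigma> - g \<tau>)\<bar>)" by (rule sum_abs)
  also have "\<dots> \<le> (\<Sum>\<tau>\<in>Om. w \<tau> * M)"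
  proof (rule sum_mono)
    fix \<tau> assume t: "\<tau> \<in> Om"
    have "\<bar>g \<sigma> - g \<tau>\<bar> \<le> M" using M s t by blast
    then have "w \<tau> * \<bar>g \<sigma> - g \<tau>\<bar> \<le> w \<tau> * M" using w_pos[of \<tau>] by (intro mult_left_mono) auto
    then show "\<bar>w \<tau> * (g \<sigma> - g \<tau>)\<bar> \<le> w \<tau> * M" using w_pos[of \<tau>] by (simp add: abs_mult)
  qed
  also have "\<dots> = M * W" unfolding W_def by (subst sum_distrib_left) (rule sum.cong, simp_all add: mult_ac)
  finally show ?thesis using W by simp
qed

lemma ip_bd:
  assumes mz: "(\<Sum>\<sigma>\<in>Om. w \<sigma> * g \<sigma>) = 0" and M: "\<forall>\<sigma>\<in>Om. \<forall>\<tau>\<in>Om. \<bar>g \<sigma> - g \<tau>\<bar> \<le> M"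
  shows "ip g g \<le> (\<Sum>\<sigma>\<in>Om. w \<sigma>) * M^2"
proof -
  have "ip g g \<le> (\<Sum>\<sigma>\<in>Om. w \<sigma> * M^2)"
    unfolding ip_def
  proof (rule sum_mono)
    fix \<sigma> assume s: "\<sigma> \<in> Om"
    have a: "\<bar>g \<sigma>\<bar> \<le> M" by (rule meanzero_bd[OF mz M s])
    have M0: "0 \<le> M" using a abs_ge_zero[of "g \<sigma>"] by linarith
    have "\<bar>g \<sigma>\<bar> * \<bar>g \<sigma>\<bar> \<le> M * M" by (rule mult_mono[OF a a M0 abs_ge_zero])
    then have "g \<sigma> * g \<sigma> \<le> M^2" by (simp add: power2_eq_square)
    then show "w \<sigma> * g \<sigma> * g \<sigma> \<le> w \<sigma> * M^2" using w_pos[of \<sigma>] by (simp add: mult.assoc mult_left_mono)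
  qed
  also have "\<dots> = (\<Sum>\<sigma>\<in>Om. w \<sigma>) * M^2" by (simp add: sum_distrib_right)
  finally show ?thesis .
qed

lemma ip_nonneg: "ip f f \<ge> 0"
  unfolding ip_def by (intro sum_nonneg) (simp add: w_pos less_imp_le mult.assoc)

lemma ip_CS: "(ip f g)^2 \<le> ip f f * ip g g"
proof -
  have "(\<Sum>x\<in>Om. w x * f x * g x)^2 \<le> (\<Sum>x\<in>Om. w x * f x ^ 2) * (\<Sum>x\<in>Om. w x * g x ^ 2)"
    by (rule wCS) (simp add: w_pos less_imp_le)
  then show ?thesis unfolding ip_def by (simp add: power2_eq_square mult.assoc)
qed

lemma Qk_mean: "V \<noteq> {} \<Longrightarrow> (\<Sum>\<sigma>\<in>Om. w \<sigma> * (Q ^^ k) g \<sigma>) = (\<Sum>\<sigma>\<in>Om. w \<sigma> * g \<sigma>)"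
  by (induction k) (simp_all add: mean_Q)

lemma poincare_Q:
  assumes V: "V \<noteq> {}" and mz: "(\<Sum>\<sigma>\<in>Om. w \<sigma> * g \<sigma>) = 0"
  shows "(1 - kap) * ip g g \<le> ip g g - ip g (Q g)"
proof -
  define b where "b k = ip ((Q ^^ k) g) ((Q ^^ k) g)" for k
  define d0 where "d0 u = 2 * (\<Sum>\<sigma>\<in>Om. \<bar>g \<sigma>\<bar>)" for u :: 'v
  define S0 where "S0 = (\<Sum>u\<in>V. d0 u)"
  define W where "W = (\<Sum>\<sigma>\<in>Om. w \<sigma>)"
  have d0n: "\<And>u. d0 u \<ge> 0" unfolding d0_def by (simp add: sum_nonneg)
  have L0: "lipd g d0"
    unfolding lipd_def
  proof (intro ballI)
    fix u \<sigma> c assume u: "u \<in> V" and s: "\<sigma> \<in> Om" and c: "c \<in> {1..q}"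
    have s2: "\<sigma>(u := c) \<in> Om" by (rule Om_upd[OF s u c])
    have "\<bar>g \<sigma>\<bar> \<le> (\<Sum>\<sigma>\<in>Om. \<bar>g \<sigma>\<bar>)" by (rule member_le_sum[OF s]) (simp_all add: finOm)
    moreover have "\<bar>g (\<sigma>(u := c))\<bar> \<le> (\<Sum>\<sigma>\<in>Om. \<bar>g \<sigma>\<bar>)" by (rule member_le_sum[OF s2]) (simp_all add: finOm)
    ultimately show "\<bar>g \<sigma> - g (\<sigma>(u := c))\<bar> \<le> d0 u" unfolding d0_def by linarith
  qed
  have kn: "kap \<ge> 0" by (rule kap_nonneg[OF V])
  have bn: "\<And>k. b k \<ge> 0" unfolding b_def by (rule ip_nonneg)
  have lc: "(b (Suc k))^2 \<le> b k * b (Suc (Suc k))" for k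
  proof -
    have "b (Suc k) = ip ((Q ^^ k) g) ((Q ^^ Suc (Suc k)) g)"
      unfolding b_def using Q_self_adj[of "Q ((Q ^^ k) g)" "(Q ^^ k) g"] by simp
    then show ?thesis unfolding b_def using ip_CS by simp
  qed
  have bd: "b k \<le> (W * S0^2) * (kap^2) ^ k" for k
  proof -
    have it: "lipd ((Q ^^ k) g) ((Td ^^ k) d0)" "\<And>u. (Td ^^ k) d0 u \<ge> 0"
      using lipd_iter[OF L0 d0n V, of k] by auto
    have Mk: "\<forall>\<sigma>\<in>Om. \<forall>\<tau>\<in>Om. \<bar>(Q ^^ k) g \<sigma> - (Q ^^ k) g \<tau>\<bar> \<le> kap ^ k * S0"
    proof (intro ballI)
      fix \<sigma> \<tau> assume "\<sigma> \<in> Om" "\<tau> \<in> Om"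
      then have "\<bar>(Q ^^ k) g \<sigma> - (Q ^^ k) g \<tau>\<bar> \<le> (\<Sum>u\<in>V. (Td ^^ k) d0 u)" by (rule path[OF it(1)])
      also have "\<dots> \<le> kap ^ k * S0" unfolding S0_def by (rule Td_iter_sum[OF d0n V])
      finally show "\<bar>(Q ^^ k) g \<sigma> - (Q ^^ k) g \<tau>\<bar> \<le> kap ^ k * S0" .
    qed
    have mzk: "(\<Sum>\<sigma>\<in>Om. w \<sigma> * (Q ^^ k) g \<sigma>) = 0" using Qk_mean[OF V] mz by simp
    have "b k \<le> W * (kap ^ k * S0)^2" unfolding b_def W_def by (rule ip_bd[OF mzk Mk])
    also have "\<dots> = (W * S0^2) * (kap^2) ^ k" by (simp add: power_mult_distrib power_mult[symmetric] mult.commute)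
    finally show ?thesis .
  qed
  have b1: "b 1 \<le> kap^2 * b 0" by (rule logconv[OF bn lc bd]) simp
  have "(ip g (Q g))^2 \<le> ip g g * ip (Q g) (Q g)" by (rule ip_CS)
  also have "\<dots> = b 0 * b 1" unfolding b_def by simp
  also have "\<dots> \<le> b 0 * (kap^2 * b 0)" using b1 bn[of 0] by (rule mult_left_mono)
  also have "\<dots> = (kap * b 0)^2" by (simp add: power2_eq_square)
  finally have "ip g (Q g) \<le> kap * b 0" by (rule power2_le_imp_le) (use kn bn in simp)
  then show ?thesis unfolding b_def by (simp add: algebra_simps)
qed

end

context sw begin

lemma main_real:
  fixes g :: "('v \<Rightarrow> nat) \<Rightarrow> real"
  assumes ev: "\<forall>\<sigma>\<in>Om. (\<Sum>\<tau>\<in>Om. P_SW V E ends q \<beta> \<sigma> \<tau> * g \<tau>) = \<xi> * g \<sigma>"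
    and ne: "\<exists>\<sigma>\<in>Om. g \<sigma> \<noteq> 0" and xi1: "\<xi> \<noteq> 1"
  shows "0 \<le> \<xi>" "\<xi> \<le> 1" "V \<noteq> {} \<Longrightarrow> exp (- 2 * \<beta> * real Dl) * (1 - \<beta> * real Dl / 2) / nn \<le> 1 - \<xi>"
proof -
  have evK: "(\<Sum>\<tau>\<in>Om. K \<sigma> \<tau> * g \<tau>) = \<xi> * (w \<sigma> * g \<sigma>)" if s: "\<sigma> \<in> Om" for \<sigma>
  proof -
    have "(\<Sum>\<tau>\<in>Om. K \<sigma> \<tau> * g \<tau>) = w \<sigma> * (\<Sum>\<tau>\<in>Om. K \<sigma> \<tau> / w \<sigma> * g \<tau>)"
      unfolding sum_distrib_left using w_pos[of \<sigma>] by (intro sum.cong) simp_all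
    also have "\<dots> = w \<sigma> * (\<xi> * g \<sigma>)" using ev s unfolding P_eq by simp
    finally show ?thesis by (simp add: mult_ac)
  qed
  have qf: "(\<Sum>\<sigma>\<in>Om. \<Sum>\<tau>\<in>Om. K \<sigma> \<tau> * g \<sigma> * g \<tau>) = \<xi> * ip g g"
  proof -
    have "(\<Sum>\<sigma>\<in>Om. \<Sum>\<tau>\<in>Om. K \<sigma> \<tau> * g \<sigma> * g \<tau>) = (\<Sum>\<sigma>\<in>Om. g \<sigma> * (\<Sum>\<tau>\<in>Om. K \<sigma> \<tau> * g \<tau>))"
      by (simp add: sum_distrib_left mult_ac)
    also have "\<dots> = (\<Sum>\<sigma>\<in>Om. g \<sigma> * (\<xi> * (w \<sigma> * g \<sigma>)))" by (rule sum.cong) (simp_all add: evK)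
    also have "\<dots> = \<xi> * ip g g" unfolding ip_def by (simp add: sum_distrib_left mult_ac)
    finally show ?thesis .
  qed
  have ipos: "ip g g > 0"
  proof -
    obtain \<sigma> where s: "\<sigma> \<in> Om" "g \<sigma> \<noteq> 0" using ne by blast
    have gg: "g \<sigma> * g \<sigma> > 0" using s(2) by (cases "g \<sigma> > 0") (auto simp: mult_pos_pos mult_neg_neg)
    have "w \<sigma> * g \<sigma> * g \<sigma> > 0" using mult_pos_pos[OF w_pos[of \<sigma>] gg] by (simp add: mult.assoc)
    then show ?thesis unfolding ip_def
      by (intro sum_pos2[OF finOm s(1)]) (auto simp: w_pos less_imp_le mult.assoc)
  qed
  have psd: "(\<Sum>\<sigma>\<in>Om. \<Sum>\<tau>\<in>Om. K \<sigma> \<tau> * g \<sigma> * g \<tau>) \<ge> 0"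
    unfolding qf_eq using xx_nonneg cq_pos
    by (intro sum_nonneg) (simp add: mult.assoc less_imp_le)
  show x0: "0 \<le> \<xi>"
  proof -
    have "0 \<le> \<xi> * ip g g" using psd qf by simp
    then show ?thesis using ipos by (simp add: zero_le_mult_iff)
  qed
  have Ee: "Esw g = (1 - \<xi>) * ip g g"
  proof -
    have "(\<Sum>\<sigma>\<in>Om. w \<sigma> * g \<sigma>^2) = ip g g" unfolding ip_def by (simp add: power2_eq_square mult.assoc)
    then show ?thesis unfolding Esw_def qf by (simp add: algebra_simps)
  qed
  have E0: "Esw g \<ge> 0" unfolding Esw_eq using xx_nonneg brk_nonneg by (intro sum_nonneg) auto
  show "\<xi> \<le> 1"
  proof -
    have "0 \<le> (1 - \<xi>) * ip g g" using E0 Ee by simp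
    then show ?thesis using ipos by (simp add: zero_le_mult_iff)
  qed
  have mz: "(\<Sum>\<sigma>\<in>Om. w \<sigma> * g \<sigma>) = 0"
  proof -
    have "(\<Sum>\<sigma>\<in>Om. \<Sum>\<tau>\<in>Om. K \<sigma> \<tau> * g \<tau>) = (\<Sum>\<tau>\<in>Om. \<Sum>\<sigma>\<in>Om. K \<sigma> \<tau> * g \<tau>)" by (rule sum.swap)
    also have "\<dots> = (\<Sum>\<tau>\<in>Om. w \<tau> * g \<tau>)"
      by (rule sum.cong) (simp_all add: sum_distrib_right[symmetric] col_sum)
    finally have A: "(\<Sum>\<sigma>\<in>Om. \<Sum>\<tau>\<in>Om. K \<sigma> \<tau> * g \<tau>) = (\<Sum>\<tau>\<in>Om. w \<tau> * g \<tau>)" .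
    have "(\<Sum>\<sigma>\<in>Om. \<Sum>\<tau>\<in>Om. K \<sigma> \<tau> * g \<tau>) = \<xi> * (\<Sum>\<sigma>\<in>Om. w \<sigma> * g \<sigma>)"
      unfolding sum_distrib_left by (rule sum.cong) (simp_all add: evK)
    with A have "(\<xi> - 1) * (\<Sum>\<sigma>\<in>Om. w \<sigma> * g \<sigma>) = 0" by (simp add: algebra_simps)
    then show ?thesis using xi1 by simp
  qed
  assume V: "V \<noteq> {}"
  have n1: "nn \<ge> 1" using nn_ge1[OF V] .
  define ed where "ed = exp (\<beta> * real Dl)"
  have ed: "ed > 0" unfolding ed_def by simp
  have qp: "real q > 0" using q1 by simp
  have P1: "(1 - kap) * ip g g \<le> ip g g - ip g (Q g)" by (rule poincare_Q[OF V mz])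
  have P2: "nn * (ip g g - ip g (Q g)) \<le> ed / (2 * real q) * (\<Sum>v\<in>V. Mloc v g)"
    unfolding ed_def by (rule Dir_Q[OF V])
  have P3: "(\<Sum>v\<in>V. Mloc v g) \<le> nn * (2 * real q * ed * Esw g)"
  proof -
    have "Mloc v g \<le> 2 * real q * ed * Esw g" if v: "v \<in> V" for v
    proof -
      have "exp (- \<beta> * real Dl) / (2 * real q) * Mloc v g \<le> Esw g" by (rule Esw_ge[OF v])
      moreover have "exp (- \<beta> * real Dl) = 1 / ed" unfolding ed_def by (simp add: exp_minus inverse_eq_divide)
      ultimately have "Mloc v g / (2 * real q * ed) \<le> Esw g" by (simp add: field_simps)
      then show ?thesis using qp ed by (simp add: pos_divide_le_eq mult_ac)
    qed
    then have "(\<Sum>v\<in>V. Mloc v g) \<le> (\<Sum>v\<in>V. 2 * real q * ed * Esw g)" by (rule sum_mono)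
    also have "\<dots> = nn * (2 * real q * ed * Esw g)" unfolding nn_def by simp
    finally show ?thesis .
  qed
  have "(1 - kap) * ip g g * nn \<le> ed / (2 * real q) * (nn * (2 * real q * ed * Esw g))"
  proof -
    have "(1 - kap) * ip g g * nn \<le> (ip g g - ip g (Q g)) * nn" using P1 n1 by (intro mult_right_mono) auto
    also have "\<dots> \<le> ed / (2 * real q) * (\<Sum>v\<in>V. Mloc v g)" using P2 by (simp add: mult.commute)
    also have "\<dots> \<le> ed / (2 * real q) * (nn * (2 * real q * ed * Esw g))"
      using P3 ed qp by (intro mult_left_mono) auto
    finally show ?thesis .
  qed
  also have "\<dots> = nn * ed^2 * ((1 - \<xi>) * ip g g)" unfolding Ee using qp by (simp add: power2_eq_square field_simps)
  finally have "(1 - kap) * nn * ip g g \<le> (nn * ed^2 * (1 - \<xi>)) * ip g g" by (simp add: mult_ac)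
  then have F: "(1 - kap) * nn \<le> nn * ed^2 * (1 - \<xi>)" using ipos by (simp add: mult_le_cancel_right)
  have kk: "(1 - kap) * nn = 1 - \<beta> * real Dl / 2" unfolding kap_def using n1 by (simp add: field_simps)
  have "ed^2 = exp (\<beta> * real Dl + \<beta> * real Dl)" unfolding ed_def power2_eq_square exp_add ..
  also have "\<beta> * real Dl + \<beta> * real Dl = 2 * \<beta> * real Dl" by simp
  finally have ed2: "ed^2 = exp (2 * \<beta> * real Dl)" .
  have e2: "exp (- 2 * \<beta> * real Dl) = 1 / ed^2"
    unfolding ed2 by (simp add: exp_minus inverse_eq_divide)
  show "exp (- 2 * \<beta> * real Dl) * (1 - \<beta> * real Dl / 2) / nn \<le> 1 - \<xi>"
    using F n1 ed unfolding kk e2 by (simp add: field_simps)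
qed

end

lemma eig_finite:
  fixes P :: "'a \<Rightarrow> 'a \<Rightarrow> real"
  assumes fin: "finite \<Omega>"
  shows "finite {\<xi>. is_eigenvalue \<Omega> P \<xi>}"
proof -
  define N where "N = card \<Omega>"
  obtain idx where bij: "bij_betw idx {0..<N} \<Omega>" using ex_bij_betw_nat_finite[OF fin] unfolding N_def by blast
  define M where "M = mat N N (\<lambda>(i,j). complex_of_real (P (idx i) (idx j)))"
  have Mc: "M \<in> carrier_mat N N" unfolding M_def by simp
  have sub: "{\<xi>. is_eigenvalue \<Omega> P \<xi>} \<subseteq> {x. poly (char_poly M) x = 0}"
  proof
    fix \<xi> assume "\<xi> \<in> {\<xi>. is_eigenvalue \<Omega> P \<xi>}"
    then obtain f where f1: "\<exists>x\<in>\<Omega>. f x \<noteq> 0"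
      and f2: "\<forall>x\<in>\<Omega>. (\<Sum>y\<in>\<Omega>. complex_of_real (P x y) * f y) = \<xi> * f x"
      unfolding is_eigenvalue_def by blast
    define v where "v = vec N (\<lambda>i. f (idx i))"
    have vc: "v \<in> carrier_vec N" unfolding v_def by simp
    have vnz: "v \<noteq> 0\<^sub>v N"
    proof
      assume v0: "v = 0\<^sub>v N"
      obtain x where x: "x \<in> \<Omega>" "f x \<noteq> 0" using f1 by blast
      obtain i where i: "i \<in> {0..<N}" "idx i = x" using bij x(1) unfolding bij_betw_def by auto
      have "v $ i = 0" using v0 i by simp
      moreover have "v $ i = f x" unfolding v_def using i by simp
      ultimately show False using x by simp
    qed
    have Mv: "M *\<^sub>v v = \<xi> \<cdot>\<^sub>v v"
    proof (rule eq_vecI)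
      show "dim_vec (M *\<^sub>v v) = dim_vec (\<xi> \<cdot>\<^sub>v v)" unfolding M_def v_def by simp
      fix i assume "i < dim_vec (\<xi> \<cdot>\<^sub>v v)"
      then have i: "i < N" unfolding v_def by simp
      have "(M *\<^sub>v v) $ i = (\<Sum>j\<in>{0..<N}. complex_of_real (P (idx i) (idx j)) * f (idx j))"
        unfolding M_def v_def using i by (simp add: mult_mat_vec_def scalar_prod_def)
      also have "\<dots> = (\<Sum>y\<in>\<Omega>. complex_of_real (P (idx i) y) * f y)"
        by (rule sum.reindex_bij_betw[OF bij])
      also have "\<dots> = \<xi> * f (idx i)" using f2 bij i unfolding bij_betw_def by auto
      also have "\<dots> = (\<xi> \<cdot>\<^sub>v v) $ i" unfolding v_def using i by simp
      finally show "(M *\<^sub>v v) $ i = (\<xi> \<cdot>\<^sub>v v) $ i" .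
    qed
    have "eigenvector M v \<xi>" unfolding eigenvector_def using vc vnz Mv Mc by simp
    then have "eigenvalue M \<xi>" unfolding eigenvalue_def by blast
    then show "\<xi> \<in> {x. poly (char_poly M) x = 0}" using eigenvalue_root_char_poly[OF Mc] by simp
  qed
  have "char_poly M \<noteq> 0" using degree_monic_char_poly[OF Mc] by auto
  then have "finite {x. poly (char_poly M) x = 0}" by (rule poly_roots_finite)
  then show ?thesis using sub finite_subset by blast
qed

context sw begin

lemma rowP: "w x * (\<Sum>y\<in>Om. P_SW V E ends q \<beta> x y * h y) = (\<Sum>y\<in>Om. K x y * h y)"
  unfolding P_eq sum_distrib_left using w_pos[of x] by (intro sum.cong) simp_all

lemma eig_real:
  assumes ev: "is_eigenvalue Om (P_SW V E ends q \<beta>) \<xi>" and x1: "\<xi> \<noteq> 1"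
  shows "Im \<xi> = 0 \<and> 0 \<le> Re \<xi> \<and> Re \<xi> \<le> 1
    \<and> (V \<noteq> {} \<longrightarrow> exp (- 2 * \<beta> * real Dl) * (1 - \<beta> * real Dl / 2) / nn \<le> 1 - Re \<xi>)"
proof -
  let ?P = "P_SW V E ends q \<beta>"
  obtain f where f1: "\<exists>x\<in>Om. f x \<noteq> 0"
    and f2: "\<forall>x\<in>Om. (\<Sum>y\<in>Om. complex_of_real (?P x y) * f y) = \<xi> * f x"
    using ev unfolding is_eigenvalue_def by blast
  define a where "a x = Re (f x)" for x
  define b where "b x = Im (f x)" for x
  have ra: "(\<Sum>y\<in>Om. ?P x y * a y) = Re \<xi> * a x - Im \<xi> * b x" if x: "x \<in> Om" for x
  proof -
    have "Re (\<Sum>y\<in>Om. complex_of_real (?P x y) * f y) = Re (\<xi> * f x)" using f2 x by simp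
    then show ?thesis unfolding a_def b_def by (simp add: Re_sum)
  qed
  have rb: "(\<Sum>y\<in>Om. ?P x y * b y) = Im \<xi> * a x + Re \<xi> * b x" if x: "x \<in> Om" for x
  proof -
    have "Im (\<Sum>y\<in>Om. complex_of_real (?P x y) * f y) = Im (\<xi> * f x)" using f2 x by simp
    then show ?thesis unfolding a_def b_def by (simp add: Im_sum)
  qed
  have gen: "(\<Sum>x\<in>Om. w x * h1 x * (\<Sum>y\<in>Om. ?P x y * h2 y)) = (\<Sum>x\<in>Om. \<Sum>y\<in>Om. K x y * h1 x * h2 y)" for h1 h2
  proof -
    have "(\<Sum>x\<in>Om. w x * h1 x * (\<Sum>y\<in>Om. ?P x y * h2 y)) = (\<Sum>x\<in>Om. h1 x * (\<Sum>y\<in>Om. K x y * h2 y))"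
      by (rule sum.cong[OF refl]) (subst rowP[symmetric], simp add: mult_ac)
    also have "\<dots> = (\<Sum>x\<in>Om. \<Sum>y\<in>Om. K x y * h1 x * h2 y)" by (simp add: sum_distrib_left mult_ac)
    finally show ?thesis .
  qed
  have symm: "(\<Sum>x\<in>Om. \<Sum>y\<in>Om. K x y * b x * a y) = (\<Sum>x\<in>Om. \<Sum>y\<in>Om. K x y * a x * b y)"
  proof -
    have "(\<Sum>x\<in>Om. \<Sum>y\<in>Om. K x y * b x * a y) = (\<Sum>y\<in>Om. \<Sum>x\<in>Om. K x y * b x * a y)" by (rule sum.swap)
    also have "\<dots> = (\<Sum>y\<in>Om. \<Sum>x\<in>Om. K y x * a y * b x)" by (simp add: K_sym mult_ac)
    finally show ?thesis .
  qed
  define Sab where "Sab = (\<Sum>x\<in>Om. w x * a x * b x)"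
  define Saa where "Saa = (\<Sum>x\<in>Om. w x * a x * a x)"
  define Sbb where "Sbb = (\<Sum>x\<in>Om. w x * b x * b x)"
  have L: "(\<Sum>x\<in>Om. w x * b x * (\<Sum>y\<in>Om. ?P x y * a y)) = Re \<xi> * Sab - Im \<xi> * Sbb"
  proof -
    have "(\<Sum>x\<in>Om. w x * b x * (\<Sum>y\<in>Om. ?P x y * a y)) = (\<Sum>x\<in>Om. Re \<xi> * (w x * a x * b x) - Im \<xi> * (w x * b x * b x))"
      by (rule sum.cong[OF refl]) (simp only: ra, simp add: algebra_simps)
    also have "\<dots> = Re \<xi> * Sab - Im \<xi> * Sbb" unfolding Sab_def Sbb_def by (simp add: sum_subtractf sum_distrib_left)
    finally show ?thesis .
  qed
  have R: "(\<Sum>x\<in>Om. w x * a x * (\<Sum>y\<in>Om. ?P x y * b y)) = Im \<xi> * Saa + Re \<xi> * Sab"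
  proof -
    have "(\<Sum>x\<in>Om. w x * a x * (\<Sum>y\<in>Om. ?P x y * b y)) = (\<Sum>x\<in>Om. Im \<xi> * (w x * a x * a x) + Re \<xi> * (w x * a x * b x))"
      by (rule sum.cong[OF refl]) (simp only: rb, simp add: algebra_simps)
    also have "\<dots> = Im \<xi> * Saa + Re \<xi> * Sab" unfolding Sab_def Saa_def by (simp add: sum.distrib sum_distrib_left)
    finally show ?thesis .
  qed
  have "Im \<xi> * (Saa + Sbb) = 0" using L R symm gen[of b a] gen[of a b] by (simp add: algebra_simps)
  moreover have pos: "Saa + Sbb > 0"
  proof -
    obtain x where x: "x \<in> Om" "f x \<noteq> 0" using f1 by blast
    then have "a x \<noteq> 0 \<or> b x \<noteq> 0" unfolding a_def b_def using complex_eqI by fastforce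
    then have gx: "w x * a x * a x + w x * b x * b x > 0"
    proof
      assume "a x \<noteq> 0"
      then have "a x * a x > 0" by (cases "a x > 0") (auto simp: mult_pos_pos mult_neg_neg)
      then have "w x * a x * a x > 0" using mult_pos_pos[OF w_pos] by (simp add: mult.assoc)
      moreover have "w x * b x * b x \<ge> 0" using w_pos[of x] by (simp add: mult.assoc less_imp_le)
      ultimately show ?thesis by linarith
    next
      assume "b x \<noteq> 0"
      then have "b x * b x > 0" by (cases "b x > 0") (auto simp: mult_pos_pos mult_neg_neg)
      then have "w x * b x * b x > 0" using mult_pos_pos[OF w_pos] by (simp add: mult.assoc)
      moreover have "w x * a x * a x \<ge> 0" using w_pos[of x] by (simp add: mult.assoc less_imp_le)
      ultimately show ?thesis by linarith
    qed
    have "Saa + Sbb = (\<Sum>x\<in>Om. w x * a x * a x + w x * b x * b x)" unfolding Saa_def Sbb_def by (simp add: sum.distrib)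
    also have "\<dots> > 0" using gx x(1) finOm
      by (intro sum_pos2[OF finOm x(1)]) (auto simp: w_pos less_imp_le mult.assoc)
    finally show ?thesis .
  qed
  ultimately have im0: "Im \<xi> = 0" by simp
  have re1: "Re \<xi> \<noteq> 1" using im0 x1 complex_eqI by (metis one_complex.simps)
  have eva: "\<forall>x\<in>Om. (\<Sum>y\<in>Om. ?P x y * a y) = Re \<xi> * a x" using ra im0 by simp
  have evb: "\<forall>x\<in>Om. (\<Sum>y\<in>Om. ?P x y * b y) = Re \<xi> * b x" using rb im0 by simp
  obtain x where x: "x \<in> Om" "f x \<noteq> 0" using f1 by blast
  then have "a x \<noteq> 0 \<or> b x \<noteq> 0" unfolding a_def b_def using complex_eqI by fastforce
  then obtain g where ev': "\<forall>x\<in>Om. (\<Sum>y\<in>Om. ?P x y * g y) = Re \<xi> * g x" and ne: "\<exists>x\<in>Om. g x \<noteq> 0"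
    using eva evb x(1) by blast
  show ?thesis using main_real[OF ev' ne re1] im0 by blast
qed

end

lemma gap_ge:
  fixes P :: "'a \<Rightarrow> 'a \<Rightarrow> real"
  assumes fin: "finite \<Omega>"
    and bd: "\<And>\<xi>. is_eigenvalue \<Omega> P \<xi> \<Longrightarrow> \<xi> \<noteq> 1 \<Longrightarrow> cmod \<xi> \<le> 1 - T"
    and T: "0 \<le> 1 - T"
  shows "spectral_gap \<Omega> P \<ge> T"
proof -
  define S where "S = {cmod \<xi> | \<xi>. is_eigenvalue \<Omega> P \<xi> \<and> \<xi> \<noteq> 1}"
  have "S \<subseteq> cmod ` {\<xi>. is_eigenvalue \<Omega> P \<xi>}" unfolding S_def by auto
  then have finS: "finite S" using eig_finite[OF fin, of P] finite_surj by blast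
  have "Max (insert 0 S) \<le> 1 - T"
    using finS T bd unfolding S_def by (subst Max_le_iff) auto
  then show ?thesis unfolding spectral_gap_def S_def by simp
qed

theorem corollary3p3:
  fixes V :: "'v set" and E :: "'e set" and ends :: "'e \<Rightarrow> 'v \<times> 'v"
    and q :: nat and \<beta> \<epsilon> :: real
  assumes "multigraph V E ends"
    and "\<beta> \<ge> 0" and "\<epsilon> > 0"
    and "\<beta> * real (max_deg V E ends) \<le> 2 * \<epsilon>"
  shows "spectral_gap (potts_configs V q) (P_SW V E ends q \<beta>)
         \<ge> (1 / (real q * (real q * exp (2 * \<beta>)) ^ (2 * max_deg V E ends)))
             * (1 - \<epsilon>) / real (card V)"
proof -
  note mg = assms(1) and beta = assms(2) and eps = assms(3) and hyp = assms(4)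
  define T where "T = (1 / (real q * (real q * exp (2 * \<beta>)) ^ (2 * max_deg V E ends))) * (1 - \<epsilon>) / real (card V)"
  have finV: "finite V" using mg unfolding multigraph_def by simp
  have finOm: "finite (potts_configs V q)" unfolding potts_configs_def using finV by (simp add: finite_PiE)
  show ?thesis
  proof (cases "V = {}")
    case True
    then have T0: "T = 0" unfolding T_def by simp
    have E0: "E = {}" using mg True unfolding multigraph_def by auto
    have Om: "potts_configs V q = {\<lambda>x. undefined}" unfolding potts_configs_def True by simp
    have P1: "P_SW V E ends q \<beta> (\<lambda>x. undefined) (\<lambda>x. undefined) = 1"
      unfolding P_SW_def Let_def mono_edges_def E0 num_comp_def True by simp
    have "cmod \<xi> \<le> 1 - T" if ev: "is_eigenvalue (potts_configs V q) (P_SW V E ends q \<beta>) \<xi>" and x1: "\<xi> \<noteq> 1" for \<xi>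
    proof -
      obtain f where f1: "f (\<lambda>x. undefined) \<noteq> 0"
        and f2: "complex_of_real (P_SW V E ends q \<beta> (\<lambda>x. undefined) (\<lambda>x. undefined)) * f (\<lambda>x. undefined) = \<xi> * f (\<lambda>x. undefined)"
        using ev unfolding is_eigenvalue_def Om by auto
      then have "f (\<lambda>x. undefined) = \<xi> * f (\<lambda>x. undefined)" unfolding P1 by simp
      then have "\<xi> = 1" using f1 by (metis mult_cancel_right1)
      then show ?thesis using x1 by simp
    qed
    then show ?thesis using gap_ge[OF finOm] T0 unfolding T_def[symmetric] by simp
  next
    case Vne: False
    show ?thesis
    proof (cases "q = 0")
      case True
      then have T0: "T = 0" unfolding T_def by simp
      have Om: "potts_configs V q = {}" unfolding potts_configs_def True using Vne by (simp add: PiE_eq_empty_iff ex_in_conv)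
      have "cmod \<xi> \<le> 1 - T" if ev: "is_eigenvalue (potts_configs V q) (P_SW V E ends q \<beta>) \<xi>" for \<xi>
        using ev unfolding is_eigenvalue_def Om by simp
      then show ?thesis using gap_ge[OF finOm] T0 unfolding T_def[symmetric] by simp
    next
      case False
      then have q1: "q \<ge> 1" by simp
      interpret sw V E ends q \<beta> using mg beta q1 by unfold_locales
      define n where "n = real (card V)"
      have n1: "n \<ge> 1" unfolding n_def using finV Vne by (simp add: Suc_le_eq card_gt_0_iff)
      have nnn: "nn = n" unfolding nn_def n_def ..
      define c where "c = 1 / (real q * (real q * exp (2 * \<beta>)) ^ (2 * Dl))"
      have qr: "real q \<ge> 1" using q1 by simp
      have c_le: "c \<le> exp (- 2 * \<beta> * real Dl)"
      proof -
        have "exp (2 * \<beta> * real Dl) \<le> exp (2 * \<beta>) ^ (2 * Dl)"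
        proof -
          have "exp (2 * \<beta>) ^ (2 * Dl) = exp (real (2 * Dl) * (2 * \<beta>))" by (rule exp_of_nat_mult[symmetric])
          moreover have "2 * \<beta> * real Dl \<le> real (2 * Dl) * (2 * \<beta>)" using beta by simp
          ultimately show ?thesis by simp
        qed
        also have "\<dots> \<le> (real q * exp (2 * \<beta>)) ^ (2 * Dl)"
          using qr by (intro power_mono) auto
        also have "\<dots> \<le> real q * (real q * exp (2 * \<beta>)) ^ (2 * Dl)"
          using qr by (simp add: mult_le_cancel_right1)
        finally have X: "exp (2 * \<beta> * real Dl) \<le> real q * (real q * exp (2 * \<beta>)) ^ (2 * Dl)" .
        have qp: "real q > 0" using qr by simp
        have pp: "0 < real q * (real q * exp (2 * \<beta>)) ^ (2 * Dl)" using qp by simp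
        have "c \<le> 1 / exp (2 * \<beta> * real Dl)" unfolding c_def
          by (rule divide_left_mono[OF X]) (use pp in simp_all)
        also have "\<dots> = exp (- 2 * \<beta> * real Dl)" by (simp add: exp_minus inverse_eq_divide)
        finally show ?thesis .
      qed
      have c0: "c \<ge> 0" unfolding c_def by simp
      have Tdef: "T = c * (1 - \<epsilon>) / n" unfolding T_def c_def n_def ..
      have bdT: "cmod \<xi> \<le> 1 - T"
        if ev: "is_eigenvalue Om (P_SW V E ends q \<beta>) \<xi>" and x1: "\<xi> \<noteq> 1" for \<xi>
      proof -
        have R: "Im \<xi> = 0" "0 \<le> Re \<xi>" "Re \<xi> \<le> 1"
           "exp (- 2 * \<beta> * real Dl) * (1 - \<beta> * real Dl / 2) / nn \<le> 1 - Re \<xi>"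
          using eig_real[OF ev x1] Vne by auto
        have cm: "cmod \<xi> = Re \<xi>" using R(1,2) by (simp add: cmod_eq_Re)
        show "cmod \<xi> \<le> 1 - T"
        proof (cases "\<epsilon> \<ge> 1")
          case True
          then have "T \<le> 0" unfolding Tdef using c0 n1 by (simp add: divide_nonpos_pos mult_nonneg_nonpos)
          then show ?thesis using cm R(3) by simp
        next
          case False
          have "T \<le> exp (- 2 * \<beta> * real Dl) * (1 - \<beta> * real Dl / 2) / n"
            unfolding Tdef using c_le c0 False hyp n1
            by (intro divide_right_mono mult_mono) auto
          then show ?thesis using cm R(4) nnn by simp
        qed
      qed
      have T1: "0 \<le> 1 - T"
      proof (cases "\<epsilon> \<ge> 1")
        case True
        then have "T \<le> 0" unfolding Tdef using c0 n1 by (simp add: divide_nonpos_pos mult_nonneg_nonpos)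
        then show ?thesis by simp
      next
        case False
        have "exp (- 2 * \<beta> * real Dl) \<le> 1" using beta by simp
        then have "c \<le> 1" using c_le by linarith
        then have "c * (1 - \<epsilon>) \<le> 1 * 1" using False eps c0 by (intro mult_mono) auto
        then have "T \<le> 1 / n" unfolding Tdef using n1 by (intro divide_right_mono) auto
        also have "\<dots> \<le> 1" using n1 by simp
        finally show ?thesis by simp
      qed
      show ?thesis using gap_ge[OF finOm, of "P_SW V E ends q \<beta>" T] bdT T1 unfolding T_def by blast
    qed
  qed
qed

end
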